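(* Let $F\colon\mathbb{A}\to\mathbb{B}$ be a double functor between double categories. Then $F$ is a double biequivalence if and only if both 2-functors $\mathbf{H}F\colon\mathbf{H}\mathbb{A}\to\mathbf{H}\mathbb{B}$ and $\mathcal{V}F\colon\mathcal{V}\mathbb{A}\to\mathcal{V}\mathbb{B}$ are biequivalences of 2-categories.
   Context: A double category has objects, horizontal morphisms, vertical morphisms and squares; a square $\alpha\colon(u\,{}^{a}_{b}\,v)$ has top horizontal boundary $a\colon A\to B$, bottom horizontal boundary $b\colon A'\to B'$, left vertical boundary $u\colon A\to A'$ and right vertical boundary $v\colon B\to B'$; compositions are strictly associative and unital and satisfy interchange; $e_A$ is the vertical identity on $A$; a square is vertically invertible if it is invertible for vertical composition. $\mathbf{H}\mathbb{A}$ is the underlying horizontal 2-category of $\mathbb{A}$: objects and horizontal morphisms of $\mathbb{A}$, and as 2-cells $a\Rightarrow b$ the squares $(e_A\,{}^{a}_{b}\,e_B)$. $\mathcal{V}\mathbb{A}$ is the 2-category whose objects are vertical morphisms $u\colon A\to A'$ of $\mathbb{A}$, whose morphisms $u\to v$ are squares with left boundary $u$ and right boundary $v$ (composed horizontally), and whose 2-cells from $\alpha\colon(u\,{}^{a}_{b}\,v)$ to $\beta\colon(u\,{}^{c}_{d}\,v)$ are pairs of squares $\sigma_0\colon(e_A\,{}^{a}_{c}\,e_B)$, $\sigma_1\colon(e_{A'}\,{}^{b}_{d}\,e_{B'})$ such that $\sigma_0$ vertically composed on top of $\beta$ equals $\alpha$ vertically composed on top of $\sigma_1$ (compositions of 2-cells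 componentwise). A horizontal morphism of $\mathbb{A}$ is a horizontal equivalence if it is an equivalence in $\mathbf{H}\mathbb{A}$; a square is weakly horizontally invertible if it is an equivalence in $\mathcal{V}\mathbb{A}$. A 2-functor $G\colon\mathcal{A}\to\mathcal{B}$ is a biequivalence if (b1) every object $B$ of $\mathcal{B}$ admits an object $A$ and an equivalence $B\to GA$; (b2) for every morphism $b\colon GA\to GC$ there is $a\colon A\to C$ and an invertible 2-cell $b\cong Ga$; (b3) for every 2-cell $\beta\colon Ga\Rightarrow Gc$ there is a unique 2-cell $\alpha\colon a\Rightarrow c$ with $G\alpha=\beta$. A double functor $F\colon\mathbb{A}\to\mathbb{B}$ is a double biequivalence if (db1) for every object $B\in\mathbb{B}$ there are an object $A\in\mathbb{A}$ and a horizontal equivalence $B\to FA$; (db2) for every horizontal morphism $b\colon FA\to FC$ in $\mathbb{B}$ there are a horizontal morphism $a\colon A\to C$ in $\mathbb{A}$ and a vertically invertible square $(e_{FA}\,{}^{b}_{Fa}\,e_{FC})$ in $\mathbb{B}$; (db3) for every vertical morphism $v\colon B\to B'$ in $\mathbb{B}$ there are a vertical morphism $u\colon A\to A'$ in $\mathbb{A}$ and a weakly horizontally invertible square in $\mathbb{B}$ with left boundary $v$, right boundary $Fu$ and horizontal boundaries horizontal equivalences $B\to FA$, $B'\to FA'$; (db4) for every square $\beta\colon(Fu\,{}^{Fa}_{Fc}\,Fu')$ in $\mathbb{B}$ there is a unique square $\alpha\colon(u\,{}^{a}_{c}\,u')$ in $\mathbb{A}$ with $F\alpha=\beta$. *)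

theory Defs
  imports Main
begin

text \<open>Composition of morphisms is written in applicative order:
  hcmp A g f is "f followed by g" (requires hcod f = hdom g); likewise vcmp.
  For squares, shcmp A beta alpha is alpha followed horizontally by beta
  (requires sright alpha = sleft beta) and svcmp A beta alpha is alpha placed
  on top of beta (requires sbot alpha = stop beta).
  shid A u is the horizontal identity square (u, id, id, u) on a vertical morphism u;
  svid A a is the vertical identity square (e_A, a, a, e_B) on a horizontal morphism a.\<close>

record ('o,'h,'v,'s) dbl =
  Ob :: "'o set"
  Hor :: "'h set"
  Ver :: "'v set"
  Sq :: "'s set"
  hdom :: "'h \<Rightarrow> 'o"
  hcod :: "'h \<Rightarrow> 'o"
  hcmp :: "'h \<Rightarrow> 'h \<Rightarrow> 'h"
  hid :: "'o \<Rightarrow> 'h"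
  vdom :: "'v \<Rightarrow> 'o"
  vcod :: "'v \<Rightarrow> 'o"
  vcmp :: "'v \<Rightarrow> 'v \<Rightarrow> 'v"
  vid :: "'o \<Rightarrow> 'v"
  stop :: "'s \<Rightarrow> 'h"
  sbot :: "'s \<Rightarrow> 'h"
  sleft :: "'s \<Rightarrow> 'v"
  sright :: "'s \<Rightarrow> 'v"
  shcmp :: "'s \<Rightarrow> 's \<Rightarrow> 's"
  svcmp :: "'s \<Rightarrow> 's \<Rightarrow> 's"
  shid :: "'v \<Rightarrow> 's"
  svid :: "'h \<Rightarrow> 's"

definition double_category :: "('o,'h,'v,'s,'z) dbl_scheme \<Rightarrow> bool" where
  "double_category A \<longleftrightarrow>
    \<comment> \<open>horizontal category\<close>
    (\<forall>f\<in>Hor A. hdom A f \<in> Ob A \<and> hcod A f \<in> Ob A) \<and>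
    (\<forall>x\<in>Ob A. hid A x \<in> Hor A \<and> hdom A (hid A x) = x \<and> hcod A (hid A x) = x) \<and>
    (\<forall>f\<in>Hor A. \<forall>g\<in>Hor A. hcod A f = hdom A g \<longrightarrow>
        hcmp A g f \<in> Hor A \<and> hdom A (hcmp A g f) = hdom A f \<and> hcod A (hcmp A g f) = hcod A g) \<and>
    (\<forall>f\<in>Hor A. \<forall>g\<in>Hor A. \<forall>h\<in>Hor A. hcod A f = hdom A g \<longrightarrow> hcod A g = hdom A h \<longrightarrow>
        hcmp A h (hcmp A g f) = hcmp A (hcmp A h g) f) \<and>
    (\<forall>f\<in>Hor A. hcmp A f (hid A (hdom A f)) = f \<and> hcmp A (hid A (hcod A f)) f = f) \<and>
    \<comment> \<open>vertical category\<close>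
    (\<forall>u\<in>Ver A. vdom A u \<in> Ob A \<and> vcod A u \<in> Ob A) \<and>
    (\<forall>x\<in>Ob A. vid A x \<in> Ver A \<and> vdom A (vid A x) = x \<and> vcod A (vid A x) = x) \<and>
    (\<forall>u\<in>Ver A. \<forall>v\<in>Ver A. vcod A u = vdom A v \<longrightarrow>
        vcmp A v u \<in> Ver A \<and> vdom A (vcmp A v u) = vdom A u \<and> vcod A (vcmp A v u) = vcod A v) \<and>
    (\<forall>u\<in>Ver A. \<forall>v\<in>Ver A. \<forall>w\<in>Ver A. vcod A u = vdom A v \<longrightarrow> vcod A v = vdom A w \<longrightarrow>
        vcmp A w (vcmp A v u) = vcmp A (vcmp A w v) u) \<and>
    (\<forall>u\<in>Ver A. vcmp A u (vid A (vdom A u)) = u \<and> vcmp A (vid A (vcod A u)) u = u) \<and>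
    \<comment> \<open>boundaries of squares\<close>
    (\<forall>\<alpha>\<in>Sq A. stop A \<alpha> \<in> Hor A \<and> sbot A \<alpha> \<in> Hor A \<and> sleft A \<alpha> \<in> Ver A \<and> sright A \<alpha> \<in> Ver A \<and>
        hdom A (stop A \<alpha>) = vdom A (sleft A \<alpha>) \<and> hcod A (stop A \<alpha>) = vdom A (sright A \<alpha>) \<and>
        hdom A (sbot A \<alpha>) = vcod A (sleft A \<alpha>) \<and> hcod A (sbot A \<alpha>) = vcod A (sright A \<alpha>)) \<and>
    \<comment> \<open>horizontal composition of squares\<close>
    (\<forall>\<alpha>\<in>Sq A. \<forall>\<beta>\<in>Sq A. sright A \<alpha> = sleft A \<beta> \<longrightarrow>
        shcmp A \<beta> \<alpha> \<in> Sq A \<and> sleft A (shcmp A \<beta> \<alpha>) = sleft A \<alpha> \<and> sright A (shcmp A \<beta> \<alpha>) = sright A \<beta> \<and>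
        stop A (shcmp A \<beta> \<alpha>) = hcmp A (stop A \<beta>) (stop A \<alpha>) \<and>
        sbot A (shcmp A \<beta> \<alpha>) = hcmp A (sbot A \<beta>) (sbot A \<alpha>)) \<and>
    (\<forall>\<alpha>\<in>Sq A. \<forall>\<beta>\<in>Sq A. \<forall>\<gamma>\<in>Sq A. sright A \<alpha> = sleft A \<beta> \<longrightarrow> sright A \<beta> = sleft A \<gamma> \<longrightarrow>
        shcmp A \<gamma> (shcmp A \<beta> \<alpha>) = shcmp A (shcmp A \<gamma> \<beta>) \<alpha>) \<and>
    (\<forall>u\<in>Ver A. shid A u \<in> Sq A \<and> sleft A (shid A u) = u \<and> sright A (shid A u) = u \<and>
        stop A (shid A u) = hid A (vdom A u) \<and> sbot A (shid A u) = hid A (vcod A u)) \<and>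
    (\<forall>\<alpha>\<in>Sq A. shcmp A \<alpha> (shid A (sleft A \<alpha>)) = \<alpha> \<and> shcmp A (shid A (sright A \<alpha>)) \<alpha> = \<alpha>) \<and>
    \<comment> \<open>vertical composition of squares\<close>
    (\<forall>\<alpha>\<in>Sq A. \<forall>\<beta>\<in>Sq A. sbot A \<alpha> = stop A \<beta> \<longrightarrow>
        svcmp A \<beta> \<alpha> \<in> Sq A \<and> stop A (svcmp A \<beta> \<alpha>) = stop A \<alpha> \<and> sbot A (svcmp A \<beta> \<alpha>) = sbot A \<beta> \<and>
        sleft A (svcmp A \<beta> \<alpha>) = vcmp A (sleft A \<beta>) (sleft A \<alpha>) \<and>
        sright A (svcmp A \<beta> \<alpha>) = vcmp A (sright A \<beta>) (sright A \<alpha>)) \<and>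
    (\<forall>\<alpha>\<in>Sq A. \<forall>\<beta>\<in>Sq A. \<forall>\<gamma>\<in>Sq A. sbot A \<alpha> = stop A \<beta> \<longrightarrow> sbot A \<beta> = stop A \<gamma> \<longrightarrow>
        svcmp A \<gamma> (svcmp A \<beta> \<alpha>) = svcmp A (svcmp A \<gamma> \<beta>) \<alpha>) \<and>
    (\<forall>a\<in>Hor A. svid A a \<in> Sq A \<and> stop A (svid A a) = a \<and> sbot A (svid A a) = a \<and>
        sleft A (svid A a) = vid A (hdom A a) \<and> sright A (svid A a) = vid A (hcod A a)) \<and>
    (\<forall>\<alpha>\<in>Sq A. svcmp A \<alpha> (svid A (stop A \<alpha>)) = \<alpha> \<and> svcmp A (svid A (sbot A \<alpha>)) \<alpha> = \<alpha>) \<and>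
    \<comment> \<open>interchange and compatibility of identities\<close>
    (\<forall>\<alpha>\<in>Sq A. \<forall>\<beta>\<in>Sq A. \<forall>\<gamma>\<in>Sq A. \<forall>\<delta>\<in>Sq A.
        sright A \<alpha> = sleft A \<beta> \<longrightarrow> sright A \<gamma> = sleft A \<delta> \<longrightarrow>
        sbot A \<alpha> = stop A \<gamma> \<longrightarrow> sbot A \<beta> = stop A \<delta> \<longrightarrow>
        svcmp A (shcmp A \<delta> \<gamma>) (shcmp A \<beta> \<alpha>) = shcmp A (svcmp A \<delta> \<beta>) (svcmp A \<gamma> \<alpha>)) \<and>
    (\<forall>a\<in>Hor A. \<forall>b\<in>Hor A. hcod A a = hdom A b \<longrightarrow>
        svid A (hcmp A b a) = shcmp A (svid A b) (svid A a)) \<and>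
    (\<forall>u\<in>Ver A. \<forall>v\<in>Ver A. vcod A u = vdom A v \<longrightarrow>
        shid A (vcmp A v u) = svcmp A (shid A v) (shid A u)) \<and>
    (\<forall>x\<in>Ob A. svid A (hid A x) = shid A (vid A x))"

record ('o,'h,'v,'s,'o2,'h2,'v2,'s2) dfun =
  FO :: "'o \<Rightarrow> 'o2"
  FH :: "'h \<Rightarrow> 'h2"
  FV :: "'v \<Rightarrow> 'v2"
  FS :: "'s \<Rightarrow> 's2"

definition double_functor ::
  "('o,'h,'v,'s,'z) dbl_scheme \<Rightarrow> ('o2,'h2,'v2,'s2,'z2) dbl_scheme \<Rightarrow>
   ('o,'h,'v,'s,'o2,'h2,'v2,'s2) dfun \<Rightarrow> bool" where
  "double_functor A B F \<longleftrightarrow>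
    (\<forall>x\<in>Ob A. FO F x \<in> Ob B) \<and>
    (\<forall>f\<in>Hor A. FH F f \<in> Hor B \<and> hdom B (FH F f) = FO F (hdom A f) \<and> hcod B (FH F f) = FO F (hcod A f)) \<and>
    (\<forall>u\<in>Ver A. FV F u \<in> Ver B \<and> vdom B (FV F u) = FO F (vdom A u) \<and> vcod B (FV F u) = FO F (vcod A u)) \<and>
    (\<forall>\<alpha>\<in>Sq A. FS F \<alpha> \<in> Sq B \<and> stop B (FS F \<alpha>) = FH F (stop A \<alpha>) \<and> sbot B (FS F \<alpha>) = FH F (sbot A \<alpha>) \<and>
        sleft B (FS F \<alpha>) = FV F (sleft A \<alpha>) \<and> sright B (FS F \<alpha>) = FV F (sright A \<alpha>)) \<and>
    (\<forall>x\<in>Ob A. FH F (hid A x) = hid B (FO F x) \<and> FV F (vid A x) = vid B (FO F x)) \<and>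
    (\<forall>f\<in>Hor A. \<forall>g\<in>Hor A. hcod A f = hdom A g \<longrightarrow> FH F (hcmp A g f) = hcmp B (FH F g) (FH F f)) \<and>
    (\<forall>u\<in>Ver A. \<forall>v\<in>Ver A. vcod A u = vdom A v \<longrightarrow> FV F (vcmp A v u) = vcmp B (FV F v) (FV F u)) \<and>
    (\<forall>u\<in>Ver A. FS F (shid A u) = shid B (FV F u)) \<and>
    (\<forall>a\<in>Hor A. FS F (svid A a) = svid B (FH F a)) \<and>
    (\<forall>\<alpha>\<in>Sq A. \<forall>\<beta>\<in>Sq A. sright A \<alpha> = sleft A \<beta> \<longrightarrow> FS F (shcmp A \<beta> \<alpha>) = shcmp B (FS F \<beta>) (FS F \<alpha>)) \<and>
    (\<forall>\<alpha>\<in>Sq A. \<forall>\<beta>\<in>Sq A. sbot A \<alpha> = stop A \<beta> \<longrightarrow> FS F (svcmp A \<beta> \<alpha>) = svcmp B (FS F \<beta>) (FS F \<alpha>))"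

text \<open>vcomp2 C tau sigma is sigma followed by tau (requires tgt2 sigma = src2 tau);
  comp1 C g f is f followed by g.\<close>

record ('o,'m,'c) tcat =
  Obj :: "'o set"
  Mor :: "'m set"
  dom1 :: "'m \<Rightarrow> 'o"
  cod1 :: "'m \<Rightarrow> 'o"
  comp1 :: "'m \<Rightarrow> 'm \<Rightarrow> 'm"
  id1 :: "'o \<Rightarrow> 'm"
  Cell :: "'c set"
  src2 :: "'c \<Rightarrow> 'm"
  tgt2 :: "'c \<Rightarrow> 'm"
  vcomp2 :: "'c \<Rightarrow> 'c \<Rightarrow> 'c"
  hcomp2 :: "'c \<Rightarrow> 'c \<Rightarrow> 'c"
  id2 :: "'m \<Rightarrow> 'c"

definition invertible2 :: "('o,'m,'c,'z) tcat_scheme \<Rightarrow> 'c \<Rightarrow> bool" where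
  "invertible2 C \<theta> \<longleftrightarrow> \<theta> \<in> Cell C \<and>
     (\<exists>\<theta>'\<in>Cell C. src2 C \<theta>' = tgt2 C \<theta> \<and> tgt2 C \<theta>' = src2 C \<theta> \<and>
        vcomp2 C \<theta>' \<theta> = id2 C (src2 C \<theta>) \<and> vcomp2 C \<theta> \<theta>' = id2 C (tgt2 C \<theta>))"

definition equivalence1 :: "('o,'m,'c,'z) tcat_scheme \<Rightarrow> 'm \<Rightarrow> bool" where
  "equivalence1 C f \<longleftrightarrow> f \<in> Mor C \<and>
     (\<exists>g\<in>Mor C. dom1 C g = cod1 C f \<and> cod1 C g = dom1 C f \<and>
        (\<exists>\<theta>. invertible2 C \<theta> \<and> src2 C \<theta> = comp1 C g f \<and> tgt2 C \<theta> = id1 C (dom1 C f)) \<and>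
        (\<exists>\<theta>. invertible2 C \<theta> \<and> src2 C \<theta> = comp1 C f g \<and> tgt2 C \<theta> = id1 C (cod1 C f)))"

record ('o,'m,'c,'o2,'m2,'c2) tfun =
  G0 :: "'o \<Rightarrow> 'o2"
  G1 :: "'m \<Rightarrow> 'm2"
  G2 :: "'c \<Rightarrow> 'c2"

definition biequivalence ::
  "('o,'m,'c,'z) tcat_scheme \<Rightarrow> ('o2,'m2,'c2,'z2) tcat_scheme \<Rightarrow>
   ('o,'m,'c,'o2,'m2,'c2) tfun \<Rightarrow> bool" where
  "biequivalence C D G \<longleftrightarrow>
    (\<forall>Y\<in>Obj D. \<exists>X\<in>Obj C. \<exists>e. equivalence1 D e \<and> dom1 D e = Y \<and> cod1 D e = G0 G X) \<and>
    (\<forall>X\<in>Obj C. \<forall>Z\<in>Obj C. \<forall>b\<in>Mor D. dom1 D b = G0 G X \<and> cod1 D b = G0 G Z \<longrightarrow>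
       (\<exists>a\<in>Mor C. dom1 C a = X \<and> cod1 C a = Z \<and>
          (\<exists>\<theta>. invertible2 D \<theta> \<and> src2 D \<theta> = b \<and> tgt2 D \<theta> = G1 G a))) \<and>
    (\<forall>a\<in>Mor C. \<forall>c\<in>Mor C. dom1 C a = dom1 C c \<and> cod1 C a = cod1 C c \<longrightarrow>
       (\<forall>\<beta>\<in>Cell D. src2 D \<beta> = G1 G a \<and> tgt2 D \<beta> = G1 G c \<longrightarrow>
          (\<exists>!\<alpha>. \<alpha> \<in> Cell C \<and> src2 C \<alpha> = a \<and> tgt2 C \<alpha> = c \<and> G2 G \<alpha> = \<beta>)))"

definition HH :: "('o,'h,'v,'s,'z) dbl_scheme \<Rightarrow> ('o,'h,'s) tcat" where
  "HH A = \<lparr> Obj = Ob A, Mor = Hor A, dom1 = hdom A, cod1 = hcod A, comp1 = hcmp A, id1 = hid A,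
     Cell = {\<alpha>\<in>Sq A. sleft A \<alpha> = vid A (hdom A (stop A \<alpha>)) \<and> sright A \<alpha> = vid A (hcod A (stop A \<alpha>))},
     src2 = stop A, tgt2 = sbot A, vcomp2 = svcmp A, hcomp2 = shcmp A, id2 = svid A \<rparr>"

text \<open>A 2-cell of V A from alpha to beta is represented as the quadruple
  (alpha, sigma0, sigma1, beta).\<close>

definition VV :: "('o,'h,'v,'s,'z) dbl_scheme \<Rightarrow> ('v,'s,'s \<times> 's \<times> 's \<times> 's) tcat" where
  "VV A = \<lparr> Obj = Ver A, Mor = Sq A, dom1 = sleft A, cod1 = sright A, comp1 = shcmp A, id1 = shid A,
     Cell = {(\<alpha>, \<sigma>0, \<sigma>1, \<beta>). \<alpha> \<in> Sq A \<and> \<beta> \<in> Sq A \<and>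
               sleft A \<alpha> = sleft A \<beta> \<and> sright A \<alpha> = sright A \<beta> \<and>
               \<sigma>0 \<in> Cell (HH A) \<and> stop A \<sigma>0 = stop A \<alpha> \<and> sbot A \<sigma>0 = stop A \<beta> \<and>
               \<sigma>1 \<in> Cell (HH A) \<and> stop A \<sigma>1 = sbot A \<alpha> \<and> sbot A \<sigma>1 = sbot A \<beta> \<and>
               svcmp A \<beta> \<sigma>0 = svcmp A \<sigma>1 \<alpha>},
     src2 = (\<lambda>(\<alpha>, \<sigma>0, \<sigma>1, \<beta>). \<alpha>),
     tgt2 = (\<lambda>(\<alpha>, \<sigma>0, \<sigma>1, \<beta>). \<beta>),
     vcomp2 = (\<lambda>(\<beta>, \<tau>0, \<tau>1, \<gamma>) (\<alpha>, \<sigma>0, \<sigma>1, \<beta>'). (\<alpha>, svcmp A \<tau>0 \<sigma>0, svcmp A \<tau>1 \<sigma>1, \<gamma>)),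
     hcomp2 = (\<lambda>(\<alpha>', \<tau>0, \<tau>1, \<beta>') (\<alpha>, \<sigma>0, \<sigma>1, \<beta>).
                 (shcmp A \<alpha>' \<alpha>, shcmp A \<tau>0 \<sigma>0, shcmp A \<tau>1 \<sigma>1, shcmp A \<beta>' \<beta>)),
     id2 = (\<lambda>\<alpha>. (\<alpha>, svid A (stop A \<alpha>), svid A (sbot A \<alpha>), \<alpha>)) \<rparr>"

definition HF :: "('o,'h,'v,'s,'o2,'h2,'v2,'s2) dfun \<Rightarrow> ('o,'h,'s,'o2,'h2,'s2) tfun" where
  "HF F = \<lparr> G0 = FO F, G1 = FH F, G2 = FS F \<rparr>"

definition VF :: "('o,'h,'v,'s,'o2,'h2,'v2,'s2) dfun \<Rightarrow>
                  ('v,'s,'s \<times> 's \<times> 's \<times> 's,'v2,'s2,'s2 \<times> 's2 \<times> 's2 \<times> 's2) tfun" where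
  "VF F = \<lparr> G0 = FV F, G1 = FS F,
            G2 = (\<lambda>(\<alpha>, \<sigma>0, \<sigma>1, \<beta>). (FS F \<alpha>, FS F \<sigma>0, FS F \<sigma>1, FS F \<beta>)) \<rparr>"

definition horizontal_equivalence :: "('o,'h,'v,'s,'z) dbl_scheme \<Rightarrow> 'h \<Rightarrow> bool" where
  "horizontal_equivalence A f \<longleftrightarrow> equivalence1 (HH A) f"

definition weakly_horizontally_invertible :: "('o,'h,'v,'s,'z) dbl_scheme \<Rightarrow> 's \<Rightarrow> bool" where
  "weakly_horizontally_invertible A \<alpha> \<longleftrightarrow> equivalence1 (VV A) \<alpha>"

definition vertically_invertible :: "('o,'h,'v,'s,'z) dbl_scheme \<Rightarrow> 's \<Rightarrow> bool" where
  "vertically_invertible A \<theta> \<longleftrightarrow> \<theta> \<in> Sq A \<and>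
     (\<exists>\<theta>'\<in>Sq A. stop A \<theta>' = sbot A \<theta> \<and> sbot A \<theta>' = stop A \<theta> \<and>
        svcmp A \<theta>' \<theta> = svid A (stop A \<theta>) \<and> svcmp A \<theta> \<theta>' = svid A (sbot A \<theta>))"

definition double_biequivalence ::
  "('o,'h,'v,'s,'z) dbl_scheme \<Rightarrow> ('o2,'h2,'v2,'s2,'z2) dbl_scheme \<Rightarrow>
   ('o,'h,'v,'s,'o2,'h2,'v2,'s2) dfun \<Rightarrow> bool" where
  "double_biequivalence A B F \<longleftrightarrow>
    \<comment> \<open>(db1)\<close>
    (\<forall>Y\<in>Ob B. \<exists>X\<in>Ob A. \<exists>h. horizontal_equivalence B h \<and> hdom B h = Y \<and> hcod B h = FO F X) \<and>
    \<comment> \<open>(db2)\<close>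
    (\<forall>X\<in>Ob A. \<forall>Z\<in>Ob A. \<forall>b\<in>Hor B. hdom B b = FO F X \<and> hcod B b = FO F Z \<longrightarrow>
       (\<exists>a\<in>Hor A. hdom A a = X \<and> hcod A a = Z \<and>
          (\<exists>\<theta>. vertically_invertible B \<theta> \<and> sleft B \<theta> = vid B (FO F X) \<and> sright B \<theta> = vid B (FO F Z) \<and>
               stop B \<theta> = b \<and> sbot B \<theta> = FH F a))) \<and>
    \<comment> \<open>(db3)\<close>
    (\<forall>v\<in>Ver B. \<exists>u\<in>Ver A. \<exists>\<alpha>. \<alpha> \<in> Sq B \<and> weakly_horizontally_invertible B \<alpha> \<and>
        sleft B \<alpha> = v \<and> sright B \<alpha> = FV F u \<and>
        horizontal_equivalence B (stop B \<alpha>) \<and> horizontal_equivalence B (sbot B \<alpha>)) \<and>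
    \<comment> \<open>(db4)\<close>
    (\<forall>u\<in>Ver A. \<forall>u'\<in>Ver A. \<forall>a\<in>Hor A. \<forall>c\<in>Hor A.
       hdom A a = vdom A u \<and> hcod A a = vdom A u' \<and> hdom A c = vcod A u \<and> hcod A c = vcod A u' \<longrightarrow>
       (\<forall>\<beta>\<in>Sq B. sleft B \<beta> = FV F u \<and> sright B \<beta> = FV F u' \<and> stop B \<beta> = FH F a \<and> sbot B \<beta> = FH F c \<longrightarrow>
          (\<exists>!\<alpha>. \<alpha> \<in> Sq A \<and> sleft A \<alpha> = u \<and> sright A \<alpha> = u' \<and> stop A \<alpha> = a \<and> sbot A \<alpha> = c \<and>
                 FS F \<alpha> = \<beta>)))"

end

theory Submission
  imports Defs
begin


locale dc = fixes A :: "('o,'h,'v,'s,'z) dbl_scheme" assumes dc: "double_category A"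
begin
lemmas D = dc[unfolded double_category_def]
lemmas D1 = D[THEN conjunct1]
lemmas D2 = D[THEN conjunct2, THEN conjunct1]
lemmas D3 = D[THEN conjunct2, THEN conjunct2, THEN conjunct1]
lemmas D4 = D[THEN conjunct2, THEN conjunct2, THEN conjunct2, THEN conjunct1]
lemmas D5 = D[THEN conjunct2, THEN conjunct2, THEN conjunct2, THEN conjunct2, THEN conjunct1]
lemmas D6 = D[THEN conjunct2, THEN conjunct2, THEN conjunct2, THEN conjunct2, THEN conjunct2, THEN conjunct1]
lemmas D7 = D[THEN conjunct2, THEN conjunct2, THEN conjunct2, THEN conjunct2, THEN conjunct2, THEN conjunct2, THEN conjunct1]
lemmas D8 = D[THEN conjunct2, THEN conjunct2, THEN conjunct2, THEN conjunct2, THEN conjunct2, THEN conjunct2, THEN conjunct2, THEN conjunct1]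
lemmas D9 = D[THEN conjunct2, THEN conjunct2, THEN conjunct2, THEN conjunct2, THEN conjunct2, THEN conjunct2, THEN conjunct2, THEN conjunct2, THEN conjunct1]
lemmas D10 = D[THEN conjunct2, THEN conjunct2, THEN conjunct2, THEN conjunct2, THEN conjunct2, THEN conjunct2, THEN conjunct2, THEN conjunct2, THEN conjunct2, THEN conjunct1]
lemmas D11 = D[THEN conjunct2, THEN conjunct2, THEN conjunct2, THEN conjunct2, THEN conjunct2, THEN conjunct2, THEN conjunct2, THEN conjunct2, THEN conjunct2, THEN conjunct2, THEN conjunct1]
lemmas D12 = D[THEN conjunct2, THEN conjunct2, THEN conjunct2, THEN conjunct2, THEN conjunct2, THEN conjunct2, THEN conjunct2, THEN conjunct2, THEN conjunct2, THEN conjunct2, THEN conjunct2, THEN conjunct1]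
lemmas D13 = D[THEN conjunct2, THEN conjunct2, THEN conjunct2, THEN conjunct2, THEN conjunct2, THEN conjunct2, THEN conjunct2, THEN conjunct2, THEN conjunct2, THEN conjunct2, THEN conjunct2, THEN conjunct2, THEN conjunct1]
lemmas D14 = D[THEN conjunct2, THEN conjunct2, THEN conjunct2, THEN conjunct2, THEN conjunct2, THEN conjunct2, THEN conjunct2, THEN conjunct2, THEN conjunct2, THEN conjunct2, THEN conjunct2, THEN conjunct2, THEN conjunct2, THEN conjunct1]
lemmas D15 = D[THEN conjunct2, THEN conjunct2, THEN conjunct2, THEN conjunct2, THEN conjunct2, THEN conjunct2, THEN conjunct2, THEN conjunct2, THEN conjunct2, THEN conjunct2, THEN conjunct2, THEN conjunct2, THEN conjunct2, THEN conjunct2, THEN conjunct1]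
lemmas D16 = D[THEN conjunct2, THEN conjunct2, THEN conjunct2, THEN conjunct2, THEN conjunct2, THEN conjunct2, THEN conjunct2, THEN conjunct2, THEN conjunct2, THEN conjunct2, THEN conjunct2, THEN conjunct2, THEN conjunct2, THEN conjunct2, THEN conjunct2, THEN conjunct1]
lemmas D17 = D[THEN conjunct2, THEN conjunct2, THEN conjunct2, THEN conjunct2, THEN conjunct2, THEN conjunct2, THEN conjunct2, THEN conjunct2, THEN conjunct2, THEN conjunct2, THEN conjunct2, THEN conjunct2, THEN conjunct2, THEN conjunct2, THEN conjunct2, THEN conjunct2, THEN conjunct1]
lemmas D18 = D[THEN conjunct2, THEN conjunct2, THEN conjunct2, THEN conjunct2, THEN conjunct2, THEN conjunct2, THEN conjunct2, THEN conjunct2, THEN conjunct2, THEN conjunct2, THEN conjunct2, THEN conjunct2, THEN conjunct2, THEN conjunct2, THEN conjunct2, THEN conjunct2, THEN conjunct2, THEN conjunct1]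
lemmas D19 = D[THEN conjunct2, THEN conjunct2, THEN conjunct2, THEN conjunct2, THEN conjunct2, THEN conjunct2, THEN conjunct2, THEN conjunct2, THEN conjunct2, THEN conjunct2, THEN conjunct2, THEN conjunct2, THEN conjunct2, THEN conjunct2, THEN conjunct2, THEN conjunct2, THEN conjunct2, THEN conjunct2, THEN conjunct1]
lemmas D20 = D[THEN conjunct2, THEN conjunct2, THEN conjunct2, THEN conjunct2, THEN conjunct2, THEN conjunct2, THEN conjunct2, THEN conjunct2, THEN conjunct2, THEN conjunct2, THEN conjunct2, THEN conjunct2, THEN conjunct2, THEN conjunct2, THEN conjunct2, THEN conjunct2, THEN conjunct2, THEN conjunct2, THEN conjunct2, THEN conjunct1]
lemmas D21 = D[THEN conjunct2, THEN conjunct2, THEN conjunct2, THEN conjunct2, THEN conjunct2, THEN conjunct2, THEN conjunct2, THEN conjunct2, THEN conjunct2, THEN conjunct2, THEN conjunct2, THEN conjunct2, THEN conjunct2, THEN conjunct2, THEN conjunct2, THEN conjunct2, THEN conjunct2, THEN conjunct2, THEN conjunct2, THEN conjunct2, THEN conjunct1]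
lemmas D22 = D[THEN conjunct2, THEN conjunct2, THEN conjunct2, THEN conjunct2, THEN conjunct2, THEN conjunct2, THEN conjunct2, THEN conjunct2, THEN conjunct2, THEN conjunct2, THEN conjunct2, THEN conjunct2, THEN conjunct2, THEN conjunct2, THEN conjunct2, THEN conjunct2, THEN conjunct2, THEN conjunct2, THEN conjunct2, THEN conjunct2, THEN conjunct2, THEN conjunct1]
lemmas D23 = D[THEN conjunct2, THEN conjunct2, THEN conjunct2, THEN conjunct2, THEN conjunct2, THEN conjunct2, THEN conjunct2, THEN conjunct2, THEN conjunct2, THEN conjunct2, THEN conjunct2, THEN conjunct2, THEN conjunct2, THEN conjunct2, THEN conjunct2, THEN conjunct2, THEN conjunct2, THEN conjunct2, THEN conjunct2, THEN conjunct2, THEN conjunct2, THEN conjunct2]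

lemma hor: "f \<in> Hor A \<Longrightarrow> hdom A f \<in> Ob A \<and> hcod A f \<in> Ob A" using D1 by blast
lemma hid: "x \<in> Ob A \<Longrightarrow> hid A x \<in> Hor A \<and> hdom A (hid A x) = x \<and> hcod A (hid A x) = x" using D2 by blast
lemma hcmp: "f \<in> Hor A \<Longrightarrow> g \<in> Hor A \<Longrightarrow> hcod A f = hdom A g \<Longrightarrow>
   hcmp A g f \<in> Hor A \<and> hdom A (hcmp A g f) = hdom A f \<and> hcod A (hcmp A g f) = hcod A g" using D3 by blast
lemma ver: "u \<in> Ver A \<Longrightarrow> vdom A u \<in> Ob A \<and> vcod A u \<in> Ob A" using D6 by blast
lemma vid: "x \<in> Ob A \<Longrightarrow> vid A x \<in> Ver A \<and> vdom A (vid A x) = x \<and> vcod A (vid A x) = x" using D7 by blast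
lemma vcmp: "u \<in> Ver A \<Longrightarrow> v \<in> Ver A \<Longrightarrow> vcod A u = vdom A v \<Longrightarrow>
   vcmp A v u \<in> Ver A \<and> vdom A (vcmp A v u) = vdom A u \<and> vcod A (vcmp A v u) = vcod A v" using D8 by blast
lemma vunit: "u \<in> Ver A \<Longrightarrow> vcmp A u (vid A (vdom A u)) = u \<and> vcmp A (vid A (vcod A u)) u = u" using D10 by blast
lemma sq: "\<alpha> \<in> Sq A \<Longrightarrow> stop A \<alpha> \<in> Hor A \<and> sbot A \<alpha> \<in> Hor A \<and> sleft A \<alpha> \<in> Ver A \<and> sright A \<alpha> \<in> Ver A \<and>
        hdom A (stop A \<alpha>) = vdom A (sleft A \<alpha>) \<and> hcod A (stop A \<alpha>) = vdom A (sright A \<alpha>) \<and>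
        hdom A (sbot A \<alpha>) = vcod A (sleft A \<alpha>) \<and> hcod A (sbot A \<alpha>) = vcod A (sright A \<alpha>)" using D11 by blast
lemma shcmp: "\<alpha> \<in> Sq A \<Longrightarrow> \<beta> \<in> Sq A \<Longrightarrow> sright A \<alpha> = sleft A \<beta> \<Longrightarrow>
        shcmp A \<beta> \<alpha> \<in> Sq A \<and> sleft A (shcmp A \<beta> \<alpha>) = sleft A \<alpha> \<and> sright A (shcmp A \<beta> \<alpha>) = sright A \<beta> \<and>
        stop A (shcmp A \<beta> \<alpha>) = hcmp A (stop A \<beta>) (stop A \<alpha>) \<and>
        sbot A (shcmp A \<beta> \<alpha>) = hcmp A (sbot A \<beta>) (sbot A \<alpha>)" using D12 by blast
lemma shid: "u \<in> Ver A \<Longrightarrow> shid A u \<in> Sq A \<and> sleft A (shid A u) = u \<and> sright A (shid A u) = u \<and>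
        stop A (shid A u) = hid A (vdom A u) \<and> sbot A (shid A u) = hid A (vcod A u)" using D14 by blast
lemma svcmp: "\<alpha> \<in> Sq A \<Longrightarrow> \<beta> \<in> Sq A \<Longrightarrow> sbot A \<alpha> = stop A \<beta> \<Longrightarrow>
        svcmp A \<beta> \<alpha> \<in> Sq A \<and> stop A (svcmp A \<beta> \<alpha>) = stop A \<alpha> \<and> sbot A (svcmp A \<beta> \<alpha>) = sbot A \<beta> \<and>
        sleft A (svcmp A \<beta> \<alpha>) = vcmp A (sleft A \<beta>) (sleft A \<alpha>) \<and>
        sright A (svcmp A \<beta> \<alpha>) = vcmp A (sright A \<beta>) (sright A \<alpha>)" using D16 by blast
lemma sassoc: "\<alpha> \<in> Sq A \<Longrightarrow> \<beta> \<in> Sq A \<Longrightarrow> \<gamma> \<in> Sq A \<Longrightarrow> sbot A \<alpha> = stop A \<beta> \<Longrightarrow> sbot A \<beta> = stop A \<gamma> \<Longrightarrow>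
        svcmp A \<gamma> (svcmp A \<beta> \<alpha>) = svcmp A (svcmp A \<gamma> \<beta>) \<alpha>" using D17 by blast
lemma svid: "a \<in> Hor A \<Longrightarrow> svid A a \<in> Sq A \<and> stop A (svid A a) = a \<and> sbot A (svid A a) = a \<and>
        sleft A (svid A a) = vid A (hdom A a) \<and> sright A (svid A a) = vid A (hcod A a)" using D18 by blast
lemma sunit: "\<alpha> \<in> Sq A \<Longrightarrow> svcmp A \<alpha> (svid A (stop A \<alpha>)) = \<alpha> \<and> svcmp A (svid A (sbot A \<alpha>)) \<alpha> = \<alpha>" using D19 by blast
end


lemma HH_simps[simp]: "Obj (HH A) = Ob A" "Mor (HH A) = Hor A" "dom1 (HH A) = hdom A" "cod1 (HH A) = hcod A"
  "comp1 (HH A) = hcmp A" "id1 (HH A) = hid A" "src2 (HH A) = stop A" "tgt2 (HH A) = sbot A"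
  "vcomp2 (HH A) = svcmp A" "id2 (HH A) = svid A"
  "Cell (HH A) = {\<alpha>\<in>Sq A. sleft A \<alpha> = vid A (hdom A (stop A \<alpha>)) \<and> sright A \<alpha> = vid A (hcod A (stop A \<alpha>))}"
  by (simp_all add: HH_def)

lemma VV_simps[simp]: "Obj (VV A) = Ver A" "Mor (VV A) = Sq A" "dom1 (VV A) = sleft A" "cod1 (VV A) = sright A"
  "comp1 (VV A) = shcmp A" "id1 (VV A) = shid A" "src2 (VV A) (a,s0,s1,b) = a" "tgt2 (VV A) (a,s0,s1,b) = b"
  "vcomp2 (VV A) (b,t0,t1,c) (a,s0,s1,b') = (a, svcmp A t0 s0, svcmp A t1 s1, c)"
  "id2 (VV A) \<alpha> = (\<alpha>, svid A (stop A \<alpha>), svid A (sbot A \<alpha>), \<alpha>)"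
  "(a,s0,s1,b) \<in> Cell (VV A) \<longleftrightarrow> a \<in> Sq A \<and> b \<in> Sq A \<and>
               sleft A a = sleft A b \<and> sright A a = sright A b \<and>
               s0 \<in> Cell (HH A) \<and> stop A s0 = stop A a \<and> sbot A s0 = stop A b \<and>
               s1 \<in> Cell (HH A) \<and> stop A s1 = sbot A a \<and> sbot A s1 = sbot A b \<and>
               svcmp A b s0 = svcmp A s1 a"
  by (simp_all add: VV_def)

lemma F_simps[simp]: "G0 (HF F) = FO F" "G1 (HF F) = FH F" "G2 (HF F) = FS F"
  "G0 (VF F) = FV F" "G1 (VF F) = FS F" "G2 (VF F) (a,s0,s1,b) = (FS F a, FS F s0, FS F s1, FS F b)"
  by (simp_all add: HF_def VF_def)

context dc begin

lemma vinv_HH: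
  assumes vi: "vertically_invertible A \<theta>" and l: "sleft A \<theta> = vid A (hdom A (stop A \<theta>))"
    and r: "sright A \<theta> = vid A (hcod A (stop A \<theta>))"
  shows "invertible2 (HH A) \<theta>"
proof -
  from vi obtain \<theta>' where th: "\<theta>\<in>Sq A" and th': "\<theta>'\<in>Sq A" "stop A \<theta>' = sbot A \<theta>" "sbot A \<theta>' = stop A \<theta>"
    "svcmp A \<theta>' \<theta> = svid A (stop A \<theta>)" "svcmp A \<theta> \<theta>' = svid A (sbot A \<theta>)"
    unfolding vertically_invertible_def by blast
  obtain x y where hx: "hdom A (stop A \<theta>) = x" and hy: "hcod A (stop A \<theta>) = y" by blast
  have l': "sleft A \<theta> = vid A x" using l hx by simp
  have r': "sright A \<theta> = vid A y" using r hy by simp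
  have S: "stop A \<theta> \<in> Hor A" "sbot A \<theta> \<in> Hor A" "sleft A \<theta>' \<in> Ver A" "sright A \<theta>' \<in> Ver A"
    using sq[OF th] sq[OF th'(1)] by auto
  have x: "x \<in> Ob A" "y \<in> Ob A" using hor[OF S(1)] hx hy by auto
  have "vdom A (sleft A \<theta>') = hdom A (stop A \<theta>')" using sq[OF th'(1)] by simp
  also have "\<dots> = vcod A (sleft A \<theta>)" using th'(2) sq[OF th] by simp
  also have "\<dots> = x" using l' vid[OF x(1)] by simp
  finally have 1: "vdom A (sleft A \<theta>') = x" .
  have "vdom A (sright A \<theta>') = hcod A (stop A \<theta>')" using sq[OF th'(1)] by simp
  also have "\<dots> = vcod A (sright A \<theta>)" using th'(2) sq[OF th] by simp
  also have "\<dots> = y" using r' vid[OF x(2)] by simp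
  finally have 2: "vdom A (sright A \<theta>') = y" .
  have c: "sleft A (svcmp A \<theta>' \<theta>) = vcmp A (sleft A \<theta>') (sleft A \<theta>)"
     "sright A (svcmp A \<theta>' \<theta>) = vcmp A (sright A \<theta>') (sright A \<theta>)"
    using svcmp[OF th th'(1)] th'(2) by auto
  have "sleft A \<theta>' = vcmp A (sleft A \<theta>') (vid A (vdom A (sleft A \<theta>')))" using vunit[OF S(3)] by simp
  also have "\<dots> = sleft A (svcmp A \<theta>' \<theta>)" using c(1) l' 1 by simp
  also have "\<dots> = vid A x" using th'(4) svid[OF S(1)] hx by simp
  finally have L: "sleft A \<theta>' = vid A x" .
  have "sright A \<theta>' = vcmp A (sright A \<theta>') (vid A (vdom A (sright A \<theta>')))" using vunit[OF S(4)] by simp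
  also have "\<dots> = sright A (svcmp A \<theta>' \<theta>)" using c(2) r' 2 by simp
  also have "\<dots> = vid A y" using th'(4) svid[OF S(1)] hy by simp
  finally have R: "sright A \<theta>' = vid A y" .
  have H: "hdom A (stop A \<theta>') = x" "hcod A (stop A \<theta>') = y"
    using sq[OF th'(1)] 1 2 by auto
  have C1: "\<theta> \<in> Cell (HH A)" using th l r by simp
  have C2: "\<theta>' \<in> Cell (HH A)" using th' L R H by simp
  show ?thesis unfolding invertible2_def using C1 C2 th' by auto
qed

lemma HH_vinv: "invertible2 (HH A) \<theta> \<Longrightarrow> vertically_invertible A \<theta> \<and> \<theta> \<in> Cell (HH A)"
  unfolding invertible2_def vertically_invertible_def by auto

lemma VV_inv_comp:
  assumes "invertible2 (VV A) (a,s0,s1,b)"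
  shows "invertible2 (HH A) s0 \<and> invertible2 (HH A) s1"
proof -
  from assms obtain p r0 r1 q where c: "(a,s0,s1,b) \<in> Cell (VV A)" "(p,r0,r1,q) \<in> Cell (VV A)"
     "p = b" "q = a" "vcomp2 (VV A) (p,r0,r1,q) (a,s0,s1,b) = id2 (VV A) a"
     "vcomp2 (VV A) (a,s0,s1,b) (p,r0,r1,q) = id2 (VV A) b"
    unfolding invertible2_def by (auto simp del: VV_simps(11) simp: VV_simps(7,8))
  then show ?thesis unfolding invertible2_def by auto
qed

lemma VV_equiv:
  assumes "equivalence1 (VV A) e"
  shows "equivalence1 (HH A) (stop A e) \<and> equivalence1 (HH A) (sbot A e)"
proof -
  from assms obtain g th1 th2 where e: "e \<in> Sq A" and g: "g \<in> Sq A" "sleft A g = sright A e" "sright A g = sleft A e"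
    and t1: "invertible2 (VV A) th1" "src2 (VV A) th1 = shcmp A g e" "tgt2 (VV A) th1 = shid A (sleft A e)"
    and t2: "invertible2 (VV A) th2" "src2 (VV A) th2 = shcmp A e g" "tgt2 (VV A) th2 = shid A (sright A e)"
    unfolding equivalence1_def by auto
  obtain p s0 s1 q where th1: "th1 = (p,s0,s1,q)" by (metis prod_cases4)
  obtain p' t0 t1 q' where th2: "th2 = (p',t0,t1,q')" by (metis prod_cases4)
  have i1: "invertible2 (HH A) s0" "invertible2 (HH A) s1" using VV_inv_comp t1(1) th1 by auto
  have i2: "invertible2 (HH A) t0" "invertible2 (HH A) t1" using VV_inv_comp t2(1) th2 by auto
  have c1: "stop A s0 = stop A p" "sbot A s0 = stop A q" "stop A s1 = sbot A p" "sbot A s1 = sbot A q"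
    using t1(1) th1 unfolding invertible2_def by auto
  have c2: "stop A t0 = stop A p'" "sbot A t0 = stop A q'" "stop A t1 = sbot A p'" "sbot A t1 = sbot A q'"
    using t2(1) th2 unfolding invertible2_def by auto
  have pq: "p = shcmp A g e" "q = shid A (sleft A e)" "p' = shcmp A e g" "q' = shid A (sright A e)"
    using t1 t2 th1 th2 by auto
  note S = sq[OF e] sq[OF g(1)] shcmp[OF e g(1)] shcmp[OF g(1) e] shid[of "sleft A e"] shid[of "sright A e"] g
  show ?thesis unfolding equivalence1_def
    using S c1 c2 pq i1 i2 by auto
qed

end

locale dfc = A: dc A + B: dc B for A :: "('o,'h,'v,'s,'z) dbl_scheme" and B :: "('o2,'h2,'v2,'s2,'z2) dbl_scheme" +
  fixes F :: "('o,'h,'v,'s,'o2,'h2,'v2,'s2) dfun"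
  assumes fn: "double_functor A B F"
begin
lemmas E = fn[unfolded double_functor_def]
lemmas E1 = E[THEN conjunct1]
lemmas E2 = E[THEN conjunct2, THEN conjunct1]
lemmas E3 = E[THEN conjunct2, THEN conjunct2, THEN conjunct1]
lemmas E4 = E[THEN conjunct2, THEN conjunct2, THEN conjunct2, THEN conjunct1]
lemmas E5 = E[THEN conjunct2, THEN conjunct2, THEN conjunct2, THEN conjunct2, THEN conjunct1]
lemmas E6 = E[THEN conjunct2, THEN conjunct2, THEN conjunct2, THEN conjunct2, THEN conjunct2, THEN conjunct1]
lemmas E7 = E[THEN conjunct2, THEN conjunct2, THEN conjunct2, THEN conjunct2, THEN conjunct2, THEN conjunct2, THEN conjunct1]
lemmas E8 = E[THEN conjunct2, THEN conjunct2, THEN conjunct2, THEN conjunct2, THEN conjunct2, THEN conjunct2, THEN conjunct2, THEN conjunct1]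
lemmas E9 = E[THEN conjunct2, THEN conjunct2, THEN conjunct2, THEN conjunct2, THEN conjunct2, THEN conjunct2, THEN conjunct2, THEN conjunct2, THEN conjunct1]
lemmas E10 = E[THEN conjunct2, THEN conjunct2, THEN conjunct2, THEN conjunct2, THEN conjunct2, THEN conjunct2, THEN conjunct2, THEN conjunct2, THEN conjunct2, THEN conjunct1]
lemmas E11 = E[THEN conjunct2, THEN conjunct2, THEN conjunct2, THEN conjunct2, THEN conjunct2, THEN conjunct2, THEN conjunct2, THEN conjunct2, THEN conjunct2, THEN conjunct2]
lemma FO: "x \<in> Ob A \<Longrightarrow> FO F x \<in> Ob B" using E1 by blast
lemma FH: "f\<in>Hor A \<Longrightarrow> FH F f \<in> Hor B \<and> hdom B (FH F f) = FO F (hdom A f) \<and> hcod B (FH F f) = FO F (hcod A f)"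
  using E2 by blast
lemma FV: "u\<in>Ver A \<Longrightarrow> FV F u \<in> Ver B \<and> vdom B (FV F u) = FO F (vdom A u) \<and> vcod B (FV F u) = FO F (vcod A u)"
  using E3 by blast
lemma FS: "\<alpha>\<in>Sq A \<Longrightarrow> FS F \<alpha> \<in> Sq B \<and> stop B (FS F \<alpha>) = FH F (stop A \<alpha>) \<and> sbot B (FS F \<alpha>) = FH F (sbot A \<alpha>) \<and>
        sleft B (FS F \<alpha>) = FV F (sleft A \<alpha>) \<and> sright B (FS F \<alpha>) = FV F (sright A \<alpha>)" using E4 by blast
lemma Fid: "x\<in>Ob A \<Longrightarrow> FH F (hid A x) = hid B (FO F x) \<and> FV F (vid A x) = vid B (FO F x)" using E5 by blast
lemma Fsvid: "a\<in>Hor A \<Longrightarrow> FS F (svid A a) = svid B (FH F a)" using E9 by blast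
lemma Fsvcmp: "\<alpha>\<in>Sq A \<Longrightarrow> \<beta>\<in>Sq A \<Longrightarrow> sbot A \<alpha> = stop A \<beta> \<Longrightarrow> FS F (svcmp A \<beta> \<alpha>) = svcmp B (FS F \<beta>) (FS F \<alpha>)"
  using E11 by blast
end



lemma ex1_uniq: "\<exists>!x. P x \<Longrightarrow> P a \<Longrightarrow> P b \<Longrightarrow> a = b"
  by (metis the1_equality)

lemmas bq = iffD1[OF biequivalence_def]
lemmas bq1 = bq[THEN conjunct1]
lemmas bq2 = bq[THEN conjunct2, THEN conjunct1]
lemmas bq3 = bq[THEN conjunct2, THEN conjunct2]

context dfc begin

lemma dbsall:
  assumes "double_biequivalence A B F"
  shows "(\<forall>Y\<in>Ob B. \<exists>X\<in>Ob A. \<exists>h. horizontal_equivalence B h \<and> hdom B h = Y \<and> hcod B h = FO F X) \<and>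
   (\<forall>X\<in>Ob A. \<forall>Z\<in>Ob A. \<forall>b\<in>Hor B. hdom B b = FO F X \<and> hcod B b = FO F Z \<longrightarrow>
       (\<exists>a\<in>Hor A. hdom A a = X \<and> hcod A a = Z \<and>
          (\<exists>\<theta>. vertically_invertible B \<theta> \<and> sleft B \<theta> = vid B (FO F X) \<and> sright B \<theta> = vid B (FO F Z) \<and>
               stop B \<theta> = b \<and> sbot B \<theta> = FH F a))) \<and>
   (\<forall>v\<in>Ver B. \<exists>u\<in>Ver A. \<exists>\<alpha>. \<alpha> \<in> Sq B \<and> weakly_horizontally_invertible B \<alpha> \<and>
        sleft B \<alpha> = v \<and> sright B \<alpha> = FV F u \<and>
        horizontal_equivalence B (stop B \<alpha>) \<and> horizontal_equivalence B (sbot B \<alpha>)) \<and>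
   (\<forall>u\<in>Ver A. \<forall>u'\<in>Ver A. \<forall>a\<in>Hor A. \<forall>c\<in>Hor A.
       hdom A a = vdom A u \<and> hcod A a = vdom A u' \<and> hdom A c = vcod A u \<and> hcod A c = vcod A u' \<longrightarrow>
       (\<forall>\<beta>\<in>Sq B. sleft B \<beta> = FV F u \<and> sright B \<beta> = FV F u' \<and> stop B \<beta> = FH F a \<and> sbot B \<beta> = FH F c \<longrightarrow>
          (\<exists>!\<alpha>. \<alpha> \<in> Sq A \<and> sleft A \<alpha> = u \<and> sright A \<alpha> = u' \<and> stop A \<alpha> = a \<and> sbot A \<alpha> = c \<and>
                 FS F \<alpha> = \<beta>)))"
  using assms unfolding double_biequivalence_def .
lemmas dbs1 = dbsall[THEN conjunct1]
lemmas dbs2 = dbsall[THEN conjunct2, THEN conjunct1]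
lemmas dbs3 = dbsall[THEN conjunct2, THEN conjunct2, THEN conjunct1]
lemmas dbs4 = dbsall[THEN conjunct2, THEN conjunct2, THEN conjunct2]

lemma db4:
  assumes db: "double_biequivalence A B F"
    and u: "u\<in>Ver A" "u'\<in>Ver A" and a: "a\<in>Hor A" "c\<in>Hor A"
    and bd: "hdom A a = vdom A u" "hcod A a = vdom A u'" "hdom A c = vcod A u" "hcod A c = vcod A u'"
    and b: "\<beta>\<in>Sq B" "sleft B \<beta> = FV F u" "sright B \<beta> = FV F u'" "stop B \<beta> = FH F a" "sbot B \<beta> = FH F c"
  shows "\<exists>!\<alpha>. \<alpha> \<in> Sq A \<and> sleft A \<alpha> = u \<and> sright A \<alpha> = u' \<and> stop A \<alpha> = a \<and> sbot A \<alpha> = c \<and> FS F \<alpha> = \<beta>"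
  apply (rule dbs4[OF db, rule_format, OF u(1) u(2) a(1) a(2) _ b(1)])
  using bd b by simp_all

lemma faithful:
  assumes db: "double_biequivalence A B F"
    and s: "\<alpha>1 \<in> Sq A" "\<alpha>2 \<in> Sq A" "sleft A \<alpha>1 = sleft A \<alpha>2" "sright A \<alpha>1 = sright A \<alpha>2"
      "stop A \<alpha>1 = stop A \<alpha>2" "sbot A \<alpha>1 = sbot A \<alpha>2" "FS F \<alpha>1 = FS F \<alpha>2"
  shows "\<alpha>1 = \<alpha>2"
proof -
  note S = A.sq[OF s(1)]
  have "\<exists>!\<alpha>. \<alpha> \<in> Sq A \<and> sleft A \<alpha> = sleft A \<alpha>1 \<and> sright A \<alpha> = sright A \<alpha>1 \<and> stop A \<alpha> = stop A \<alpha>1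
      \<and> sbot A \<alpha> = sbot A \<alpha>1 \<and> FS F \<alpha> = FS F \<alpha>1"
    apply (rule db4[OF db])
    using S FS[OF s(1)] by simp_all
  note ex = this
  have "(THE \<alpha>. \<alpha> \<in> Sq A \<and> sleft A \<alpha> = sleft A \<alpha>1 \<and> sright A \<alpha> = sright A \<alpha>1 \<and> stop A \<alpha> = stop A \<alpha>1
      \<and> sbot A \<alpha> = sbot A \<alpha>1 \<and> FS F \<alpha> = FS F \<alpha>1) = \<alpha>1"
    by (rule the1_equality[OF ex]) (use s in simp)
  moreover have "(THE \<alpha>. \<alpha> \<in> Sq A \<and> sleft A \<alpha> = sleft A \<alpha>1 \<and> sright A \<alpha> = sright A \<alpha>1 \<and> stop A \<alpha> = stop A \<alpha>1
      \<and> sbot A \<alpha> = sbot A \<alpha>1 \<and> FS F \<alpha> = FS F \<alpha>1) = \<alpha>2"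
    by (rule the1_equality[OF ex]) (use s in simp)
  ultimately show ?thesis by simp
qed

lemma lift_glob:
  assumes db: "double_biequivalence A B F"
    and a: "a\<in>Hor A" "c\<in>Hor A" "hdom A a = hdom A c" "hcod A a = hcod A c"
    and b: "\<beta> \<in> Cell (HH B)" "stop B \<beta> = FH F a" "sbot B \<beta> = FH F c"
  shows "\<exists>!\<alpha>. \<alpha> \<in> Cell (HH A) \<and> stop A \<alpha> = a \<and> sbot A \<alpha> = c \<and> FS F \<alpha> = \<beta>"
proof -
  have x: "hdom A a \<in> Ob A" "hcod A a \<in> Ob A" using A.hor[OF a(1)] by auto
  define u where "u = vid A (hdom A a)"
  define u' where "u' = vid A (hcod A a)"
  have U: "u \<in> Ver A" "u' \<in> Ver A" "vdom A u = hdom A a" "vcod A u = hdom A a"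
      "vdom A u' = hcod A a" "vcod A u' = hcod A a" using A.vid[OF x(1)] A.vid[OF x(2)] u_def u'_def by auto
  have FU: "FV F u = vid B (FO F (hdom A a))" "FV F u' = vid B (FO F (hcod A a))"
    using Fid x u_def u'_def by auto
  have bb: "\<beta> \<in> Sq B" "sleft B \<beta> = vid B (hdom B (stop B \<beta>))" "sright B \<beta> = vid B (hcod B (stop B \<beta>))"
    using b(1) by auto
  have bs: "sleft B \<beta> = FV F u" "sright B \<beta> = FV F u'"
    using bb FU b(2) FH[OF a(1)] by auto
  have E: "\<exists>!\<alpha>. \<alpha> \<in> Sq A \<and> sleft A \<alpha> = u \<and> sright A \<alpha> = u' \<and> stop A \<alpha> = a \<and> sbot A \<alpha> = c \<and> FS F \<alpha> = \<beta>"
    apply (rule db4[OF db U(1,2) a(1,2)])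
    using U a bb(1) bs b by auto
  have eq: "\<And>\<alpha>. (\<alpha> \<in> Cell (HH A) \<and> stop A \<alpha> = a \<and> sbot A \<alpha> = c \<and> FS F \<alpha> = \<beta>) \<longleftrightarrow>
     (\<alpha> \<in> Sq A \<and> sleft A \<alpha> = u \<and> sright A \<alpha> = u' \<and> stop A \<alpha> = a \<and> sbot A \<alpha> = c \<and> FS F \<alpha> = \<beta>)"
    using u_def u'_def by auto
  show ?thesis using E unfolding eq .
qed

lemma H_from_db:
  assumes db: "double_biequivalence A B F"
  shows "biequivalence (HH A) (HH B) (HF F)"
proof -
  have 1: "\<forall>Y\<in>Ob B. \<exists>X\<in>Ob A. \<exists>e. equivalence1 (HH B) e \<and> hdom B e = Y \<and> hcod B e = FO F X"
    using dbs1[OF db] unfolding horizontal_equivalence_def .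
  have 2: "\<forall>X\<in>Ob A. \<forall>Z\<in>Ob A. \<forall>b\<in>Hor B. hdom B b = FO F X \<and> hcod B b = FO F Z \<longrightarrow>
       (\<exists>a\<in>Hor A. hdom A a = X \<and> hcod A a = Z \<and>
          (\<exists>\<theta>. invertible2 (HH B) \<theta> \<and> stop B \<theta> = b \<and> sbot B \<theta> = FH F a))"
  proof (intro ballI impI)
    fix X Z b assume X: "X\<in>Ob A" "Z\<in>Ob A" "b\<in>Hor B" "hdom B b = FO F X \<and> hcod B b = FO F Z"
    obtain a \<theta> where a: "a\<in>Hor A" "hdom A a = X" "hcod A a = Z" "vertically_invertible B \<theta>"
      "sleft B \<theta> = vid B (FO F X)" "sright B \<theta> = vid B (FO F Z)" "stop B \<theta> = b" "sbot B \<theta> = FH F a"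
      using dbs2[OF db, rule_format, OF X(1) X(2) X(3) X(4)] by blast
    have "invertible2 (HH B) \<theta>" using B.vinv_HH[OF a(4)] a X(4) by simp
    then show "\<exists>a\<in>Hor A. hdom A a = X \<and> hcod A a = Z \<and>
          (\<exists>\<theta>. invertible2 (HH B) \<theta> \<and> stop B \<theta> = b \<and> sbot B \<theta> = FH F a)" using a by blast
  qed
  have 3: "\<forall>a\<in>Hor A. \<forall>c\<in>Hor A. hdom A a = hdom A c \<and> hcod A a = hcod A c \<longrightarrow>
       (\<forall>\<beta>\<in>Cell (HH B). stop B \<beta> = FH F a \<and> sbot B \<beta> = FH F c \<longrightarrow>
          (\<exists>!\<alpha>. \<alpha> \<in> Cell (HH A) \<and> stop A \<alpha> = a \<and> sbot A \<alpha> = c \<and> FS F \<alpha> = \<beta>))"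
  proof (intro ballI impI)
    fix a c \<beta> assume h: "a\<in>Hor A" "c\<in>Hor A" "hdom A a = hdom A c \<and> hcod A a = hcod A c"
      "\<beta>\<in>Cell (HH B)" "stop B \<beta> = FH F a \<and> sbot B \<beta> = FH F c"
    show "\<exists>!\<alpha>. \<alpha> \<in> Cell (HH A) \<and> stop A \<alpha> = a \<and> sbot A \<alpha> = c \<and> FS F \<alpha> = \<beta>"
      using h by (intro lift_glob[OF db]) simp_all
  qed
  show ?thesis unfolding biequivalence_def HH_simps(1-10) F_simps using 1 2 3 by (intro conjI)
qed

lemma V2_from_db:
  assumes db: "double_biequivalence A B F"
    and u: "u\<in>Ver A" and u': "u'\<in>Ver A" and b: "b\<in>Sq B" "sleft B b = FV F u" "sright B b = FV F u'"
  shows "\<exists>a\<in>Sq A. sleft A a = u \<and> sright A a = u' \<and>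
     (\<exists>\<theta>. invertible2 (VV B) \<theta> \<and> src2 (VV B) \<theta> = b \<and> tgt2 (VV B) \<theta> = FS F a)"
proof -
  note Sb = B.sq[OF b(1)]
  note Fu = FV[OF u(1)] and Fu' = FV[OF u'(1)]
  have ob: "vdom A u \<in> Ob A" "vcod A u \<in> Ob A" "vdom A u' \<in> Ob A" "vcod A u' \<in> Ob A"
    using A.ver u u' by auto
  have h1: "hdom B (stop B b) = FO F (vdom A u) \<and> hcod B (stop B b) = FO F (vdom A u')"
    using Sb Fu Fu' b by simp
  have h2: "hdom B (sbot B b) = FO F (vcod A u) \<and> hcod B (sbot B b) = FO F (vcod A u')"
    using Sb Fu Fu' b by simp
  obtain a0 \<theta>0 where a0: "a0\<in>Hor A" "hdom A a0 = vdom A u" "hcod A a0 = vdom A u'" "vertically_invertible B \<theta>0"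
      "sleft B \<theta>0 = vid B (FO F (vdom A u))" "sright B \<theta>0 = vid B (FO F (vdom A u'))" "stop B \<theta>0 = stop B b"
      "sbot B \<theta>0 = FH F a0"
    using dbs2[OF db, rule_format, OF ob(1) ob(3) _ h1] Sb by blast
  obtain a1 \<theta>1 where a1: "a1\<in>Hor A" "hdom A a1 = vcod A u" "hcod A a1 = vcod A u'" "vertically_invertible B \<theta>1"
      "sleft B \<theta>1 = vid B (FO F (vcod A u))" "sright B \<theta>1 = vid B (FO F (vcod A u'))" "stop B \<theta>1 = sbot B b"
      "sbot B \<theta>1 = FH F a1"
    using dbs2[OF db, rule_format, OF ob(2) ob(4) _ h2] Sb by blast
  have i0: "invertible2 (HH B) \<theta>0" using B.vinv_HH[OF a0(4)] a0 h1 by simp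
  have i1: "invertible2 (HH B) \<theta>1" using B.vinv_HH[OF a1(4)] a1 h2 by simp
  obtain \<theta>0' where t0: "\<theta>0 \<in> Cell (HH B)" "\<theta>0' \<in> Cell (HH B)" "stop B \<theta>0' = sbot B \<theta>0" "sbot B \<theta>0' = stop B \<theta>0"
     "svcmp B \<theta>0' \<theta>0 = svid B (stop B \<theta>0)" "svcmp B \<theta>0 \<theta>0' = svid B (sbot B \<theta>0)"
    using i0 unfolding invertible2_def HH_simps(7-10) by blast
  obtain \<theta>1' where t1: "\<theta>1 \<in> Cell (HH B)" "\<theta>1' \<in> Cell (HH B)" "stop B \<theta>1' = sbot B \<theta>1" "sbot B \<theta>1' = stop B \<theta>1"
     "svcmp B \<theta>1' \<theta>1 = svid B (stop B \<theta>1)" "svcmp B \<theta>1 \<theta>1' = svid B (sbot B \<theta>1)"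
    using i1 unfolding invertible2_def HH_simps(7-10) by blast
  have q0: "\<theta>0 \<in> Sq B" "\<theta>0' \<in> Sq B" "sleft B \<theta>0' = vid B (hdom B (stop B \<theta>0'))"
    "sright B \<theta>0' = vid B (hcod B (stop B \<theta>0'))" using t0 by auto
  have q1: "\<theta>1 \<in> Sq B" "\<theta>1' \<in> Sq B" using t1 by auto
  have FHa0: "FH F a0 \<in> Hor B" "hdom B (FH F a0) = FO F (vdom A u)" "hcod B (FH F a0) = FO F (vdom A u')"
    using FH[OF a0(1)] a0 by auto
  have l0: "sleft B \<theta>0' = vid B (FO F (vdom A u))" "sright B \<theta>0' = vid B (FO F (vdom A u'))"
    using q0(3,4) t0(3) a0(8) FHa0 by auto
  define Y where "Y = svcmp B b \<theta>0'"
  have Y: "Y \<in> Sq B" "stop B Y = FH F a0" "sbot B Y = sbot B b"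
     "sleft B Y = vcmp B (FV F u) (vid B (FO F (vdom A u)))"
     "sright B Y = vcmp B (FV F u') (vid B (FO F (vdom A u')))"
    using B.svcmp[OF q0(2) b(1)] t0(3,4) a0(7,8) l0 b(2,3) unfolding Y_def by auto
  have Y2: "sleft B Y = FV F u" "sright B Y = FV F u'"
    using Y(4,5) B.vunit[of "FV F u"] B.vunit[of "FV F u'"] Fu Fu' by auto
  define \<beta> where "\<beta> = svcmp B \<theta>1 Y"
  have bt: "\<beta> \<in> Sq B" "stop B \<beta> = FH F a0" "sbot B \<beta> = FH F a1"
     "sleft B \<beta> = vcmp B (vid B (FO F (vcod A u))) (FV F u)"
     "sright B \<beta> = vcmp B (vid B (FO F (vcod A u'))) (FV F u')"
    using B.svcmp[OF Y(1) q1(1)] Y Y2 a1 unfolding \<beta>_def by auto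
  have bt2: "sleft B \<beta> = FV F u" "sright B \<beta> = FV F u'"
    using bt(4,5) B.vunit[of "FV F u"] B.vunit[of "FV F u'"] Fu Fu' by auto
  have "\<exists>\<alpha>. \<alpha> \<in> Sq A \<and> sleft A \<alpha> = u \<and> sright A \<alpha> = u' \<and> stop A \<alpha> = a0 \<and> sbot A \<alpha> = a1 \<and> FS F \<alpha> = \<beta>"
    apply (rule ex1_implies_ex)
    apply (rule db4[OF db u u' a0(1) a1(1)])
    using a0 a1 bt bt2 by simp_all
  then obtain \<alpha> where al: "\<alpha> \<in> Sq A" "sleft A \<alpha> = u" "sright A \<alpha> = u'" "stop A \<alpha> = a0" "sbot A \<alpha> = a1"
    "FS F \<alpha> = \<beta>" by blast
  have e1: "svcmp B \<beta> \<theta>0 = svcmp B \<theta>1 b"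
  proof -
    have "svcmp B \<beta> \<theta>0 = svcmp B \<theta>1 (svcmp B Y \<theta>0)"
      unfolding \<beta>_def using B.sassoc[OF q0(1) Y(1) q1(1)] Y a0 a1 by simp
    also have "svcmp B Y \<theta>0 = svcmp B b (svcmp B \<theta>0' \<theta>0)"
      unfolding Y_def using B.sassoc[OF q0(1) q0(2) b(1)] t0 a0(7) by simp
    also have "\<dots> = b" using t0(5) a0(7) B.sunit[OF b(1)] by simp
    finally show ?thesis .
  qed
  have e2: "svcmp B b \<theta>0' = svcmp B \<theta>1' \<beta>"
  proof -
    have "svcmp B \<theta>1' \<beta> = svcmp B (svcmp B \<theta>1' \<theta>1) Y"
      unfolding \<beta>_def using B.sassoc[OF Y(1) q1(1) q1(2)] Y a1 t1 by simp
    also have "\<dots> = Y" using t1(5) a1(7) Y(3) B.sunit[OF Y(1)] by simp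
    finally show ?thesis unfolding Y_def by simp
  qed
  have Fa: "FS F \<alpha> \<in> Sq B" "stop B (FS F \<alpha>) = FH F a0" "sbot B (FS F \<alpha>) = FH F a1"
     "sleft B (FS F \<alpha>) = FV F u" "sright B (FS F \<alpha>) = FV F u'" using al bt bt2 by auto
  have C1: "(b, \<theta>0, \<theta>1, FS F \<alpha>) \<in> Cell (VV B)"
    unfolding VV_simps(11) using b Fa t0(1) t1(1) a0 a1 e1 al(6) by auto
  have C2: "(FS F \<alpha>, \<theta>0', \<theta>1', b) \<in> Cell (VV B)"
    unfolding VV_simps(11) using b Fa t0 t1 a0 a1 e2 al(6) by auto
  have "invertible2 (VV B) (b, \<theta>0, \<theta>1, FS F \<alpha>)"
    unfolding invertible2_def
    apply (rule conjI[OF C1])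
    apply (rule bexI[OF _ C2])
    using t0 t1 a0 a1 Fa by simp
  then show ?thesis using al by auto
qed

lemma V3_from_db:
  assumes db: "double_biequivalence A B F"
    and a: "a\<in>Sq A" and c: "c\<in>Sq A" and ac: "sleft A a = sleft A c" "sright A a = sright A c"
    and bt: "\<beta> \<in> Cell (VV B)" "src2 (VV B) \<beta> = FS F a" "tgt2 (VV B) \<beta> = FS F c"
  shows "\<exists>!\<alpha>. \<alpha> \<in> Cell (VV A) \<and> src2 (VV A) \<alpha> = a \<and> tgt2 (VV A) \<alpha> = c \<and> G2 (VF F) \<alpha> = \<beta>"
proof -
  obtain p \<sigma>0 \<sigma>1 q where bq: "\<beta> = (p,\<sigma>0,\<sigma>1,q)" by (metis prod_cases4)
  have pq: "p = FS F a" "q = FS F c" using bt bq by auto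
  note Sa = A.sq[OF a(1)] and Sc = A.sq[OF c(1)] and Fa = FS[OF a(1)] and Fc = FS[OF c(1)]
  have cl: "\<sigma>0 \<in> Cell (HH B)" "stop B \<sigma>0 = FH F (stop A a)" "sbot B \<sigma>0 = FH F (stop A c)"
    "\<sigma>1 \<in> Cell (HH B)" "stop B \<sigma>1 = FH F (sbot A a)" "sbot B \<sigma>1 = FH F (sbot A c)"
    "svcmp B (FS F c) \<sigma>0 = svcmp B \<sigma>1 (FS F a)"
    using bt(1) unfolding bq pq VV_simps(11) using Fa Fc by auto
  have hd: "hdom A (stop A a) = hdom A (stop A c)" "hcod A (stop A a) = hcod A (stop A c)"
     "hdom A (sbot A a) = hdom A (sbot A c)" "hcod A (sbot A a) = hcod A (sbot A c)"
    using Sa Sc ac by auto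
  have E0: "\<exists>!\<tau>. \<tau> \<in> Cell (HH A) \<and> stop A \<tau> = stop A a \<and> sbot A \<tau> = stop A c \<and> FS F \<tau> = \<sigma>0"
    by (rule lift_glob[OF db]) (use Sa Sc hd cl in simp_all)
  have E1: "\<exists>!\<tau>. \<tau> \<in> Cell (HH A) \<and> stop A \<tau> = sbot A a \<and> sbot A \<tau> = sbot A c \<and> FS F \<tau> = \<sigma>1"
    by (rule lift_glob[OF db]) (use Sa Sc hd cl in simp_all)
  obtain \<tau>0 where t0: "\<tau>0 \<in> Cell (HH A)" "stop A \<tau>0 = stop A a" "sbot A \<tau>0 = stop A c" "FS F \<tau>0 = \<sigma>0"
    using ex1_implies_ex[OF E0] by blast
  obtain \<tau>1 where t1: "\<tau>1 \<in> Cell (HH A)" "stop A \<tau>1 = sbot A a" "sbot A \<tau>1 = sbot A c" "FS F \<tau>1 = \<sigma>1"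
    using ex1_implies_ex[OF E1] by blast
  have T0: "\<tau>0 \<in> Sq A" "sleft A \<tau>0 = vid A (vdom A (sleft A c))" "sright A \<tau>0 = vid A (vdom A (sright A c))"
    using t0 Sa ac by auto
  have T1: "\<tau>1 \<in> Sq A" "sleft A \<tau>1 = vid A (vcod A (sleft A a))" "sright A \<tau>1 = vid A (vcod A (sright A a))"
    using t1 Sa by auto
  have X: "svcmp A c \<tau>0 \<in> Sq A" "sleft A (svcmp A c \<tau>0) = sleft A c" "sright A (svcmp A c \<tau>0) = sright A c"
     "stop A (svcmp A c \<tau>0) = stop A a" "sbot A (svcmp A c \<tau>0) = sbot A c"
    using A.svcmp[OF T0(1) c(1)] t0 T0 A.vunit[of "sleft A c"] A.vunit[of "sright A c"] Sc by auto
  have Z: "svcmp A \<tau>1 a \<in> Sq A" "sleft A (svcmp A \<tau>1 a) = sleft A a" "sright A (svcmp A \<tau>1 a) = sright A a"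
     "stop A (svcmp A \<tau>1 a) = stop A a" "sbot A (svcmp A \<tau>1 a) = sbot A c"
    using A.svcmp[OF a(1) T1(1)] t1 T1 A.vunit[of "sleft A a"] A.vunit[of "sright A a"] Sa by auto
  have FX: "FS F (svcmp A c \<tau>0) = FS F (svcmp A \<tau>1 a)"
    using Fsvcmp[OF T0(1) c(1)] Fsvcmp[OF a(1) T1(1)] t0 t1 cl(7) by simp
  have eqc: "svcmp A c \<tau>0 = svcmp A \<tau>1 a"
    by (rule faithful[OF db X(1) Z(1)]) (use X Z ac FX in simp_all)
  show ?thesis
  proof (rule ex1I[of _ "(a,\<tau>0,\<tau>1,c)"])
    show "(a,\<tau>0,\<tau>1,c) \<in> Cell (VV A) \<and> src2 (VV A) (a,\<tau>0,\<tau>1,c) = a \<and> tgt2 (VV A) (a,\<tau>0,\<tau>1,c) = c \<and>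
          G2 (VF F) (a,\<tau>0,\<tau>1,c) = \<beta>"
      unfolding VV_simps F_simps using a c ac t0 t1 eqc bq pq by simp
  next
    fix \<alpha> assume h: "\<alpha> \<in> Cell (VV A) \<and> src2 (VV A) \<alpha> = a \<and> tgt2 (VV A) \<alpha> = c \<and> G2 (VF F) \<alpha> = \<beta>"
    obtain a' s0 s1 c' where ab: "\<alpha> = (a',s0,s1,c')" by (metis prod_cases4)
    have h': "a' = a" "c' = c" "s0 \<in> Cell (HH A)" "stop A s0 = stop A a" "sbot A s0 = stop A c" "FS F s0 = \<sigma>0"
      "s1 \<in> Cell (HH A)" "stop A s1 = sbot A a" "sbot A s1 = sbot A c" "FS F s1 = \<sigma>1"
      using h unfolding ab bq VV_simps(7,8,11) F_simps(6) by auto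
    have "s0 = \<tau>0" by (rule ex1_uniq[OF E0]) (use h' t0 in simp_all)
    moreover have "s1 = \<tau>1" by (rule ex1_uniq[OF E1]) (use h' t1 in simp_all)
    ultimately show "\<alpha> = (a,\<tau>0,\<tau>1,c)" using ab h' by simp
  qed
qed

lemma V_from_db:
  assumes db: "double_biequivalence A B F"
  shows "biequivalence (VV A) (VV B) (VF F)"
proof -
  have 1: "\<forall>Y\<in>Ver B. \<exists>X\<in>Ver A. \<exists>e. equivalence1 (VV B) e \<and> sleft B e = Y \<and> sright B e = FV F X"
    using dbs3[OF db] unfolding weakly_horizontally_invertible_def by blast
  have 2: "\<forall>X\<in>Ver A. \<forall>Z\<in>Ver A. \<forall>b\<in>Sq B. sleft B b = FV F X \<and> sright B b = FV F Z \<longrightarrow>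
       (\<exists>a\<in>Sq A. sleft A a = X \<and> sright A a = Z \<and>
          (\<exists>\<theta>. invertible2 (VV B) \<theta> \<and> src2 (VV B) \<theta> = b \<and> tgt2 (VV B) \<theta> = FS F a))"
    using V2_from_db[OF db] by blast
  have 3: "\<forall>a\<in>Sq A. \<forall>c\<in>Sq A. sleft A a = sleft A c \<and> sright A a = sright A c \<longrightarrow>
       (\<forall>\<beta>\<in>Cell (VV B). src2 (VV B) \<beta> = FS F a \<and> tgt2 (VV B) \<beta> = FS F c \<longrightarrow>
          (\<exists>!\<alpha>. \<alpha> \<in> Cell (VV A) \<and> src2 (VV A) \<alpha> = a \<and> tgt2 (VV A) \<alpha> = c \<and> G2 (VF F) \<alpha> = \<beta>))"
  proof (intro ballI impI)
    fix a c \<beta> assume h: "a\<in>Sq A" "c\<in>Sq A" "sleft A a = sleft A c \<and> sright A a = sright A c"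
      "\<beta>\<in>Cell (VV B)" "src2 (VV B) \<beta> = FS F a \<and> tgt2 (VV B) \<beta> = FS F c"
    show "\<exists>!\<alpha>. \<alpha> \<in> Cell (VV A) \<and> src2 (VV A) \<alpha> = a \<and> tgt2 (VV A) \<alpha> = c \<and> G2 (VF F) \<alpha> = \<beta>"
      using h by (intro V3_from_db[OF db]) simp_all
  qed
  show ?thesis unfolding biequivalence_def VV_simps(1-6) F_simps(4,5) using 1 2 3 by (intro conjI)
qed

lemma HV_parts:
  assumes H: "biequivalence (HH A) (HH B) (HF F)" and V: "biequivalence (VV A) (VV B) (VF F)"
  shows H1: "\<forall>Y\<in>Ob B. \<exists>X\<in>Ob A. \<exists>e. equivalence1 (HH B) e \<and> hdom B e = Y \<and> hcod B e = FO F X"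
    and H2: "\<forall>X\<in>Ob A. \<forall>Z\<in>Ob A. \<forall>b\<in>Hor B. hdom B b = FO F X \<and> hcod B b = FO F Z \<longrightarrow>
       (\<exists>a\<in>Hor A. hdom A a = X \<and> hcod A a = Z \<and>
          (\<exists>\<theta>. invertible2 (HH B) \<theta> \<and> stop B \<theta> = b \<and> sbot B \<theta> = FH F a))"
    and H3: "\<forall>a\<in>Hor A. \<forall>c\<in>Hor A. hdom A a = hdom A c \<and> hcod A a = hcod A c \<longrightarrow>
       (\<forall>\<beta>\<in>Cell (HH B). stop B \<beta> = FH F a \<and> sbot B \<beta> = FH F c \<longrightarrow>
          (\<exists>!\<alpha>. \<alpha> \<in> Cell (HH A) \<and> stop A \<alpha> = a \<and> sbot A \<alpha> = c \<and> FS F \<alpha> = \<beta>))"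
    and V1: "\<forall>Y\<in>Ver B. \<exists>X\<in>Ver A. \<exists>e. equivalence1 (VV B) e \<and> sleft B e = Y \<and> sright B e = FV F X"
    and V2: "\<forall>X\<in>Ver A. \<forall>Z\<in>Ver A. \<forall>b\<in>Sq B. sleft B b = FV F X \<and> sright B b = FV F Z \<longrightarrow>
       (\<exists>a\<in>Sq A. sleft A a = X \<and> sright A a = Z \<and>
          (\<exists>\<theta>. invertible2 (VV B) \<theta> \<and> src2 (VV B) \<theta> = b \<and> tgt2 (VV B) \<theta> = FS F a))"
    and V3: "\<forall>a\<in>Sq A. \<forall>c\<in>Sq A. sleft A a = sleft A c \<and> sright A a = sright A c \<longrightarrow>
       (\<forall>\<beta>\<in>Cell (VV B). src2 (VV B) \<beta> = FS F a \<and> tgt2 (VV B) \<beta> = FS F c \<longrightarrow>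
          (\<exists>!\<alpha>. \<alpha> \<in> Cell (VV A) \<and> src2 (VV A) \<alpha> = a \<and> tgt2 (VV A) \<alpha> = c \<and> G2 (VF F) \<alpha> = \<beta>))"
  using bq1[OF H] bq2[OF H] bq3[OF H] bq1[OF V] bq2[OF V] bq3[OF V]
  unfolding HH_simps(1-10) VV_simps(1-6) F_simps(1-5) by -

lemma db4_from_HV:
  assumes H: "biequivalence (HH A) (HH B) (HF F)" and V: "biequivalence (VV A) (VV B) (VF F)"
    and u: "u\<in>Ver A" and u': "u'\<in>Ver A" and a: "a\<in>Hor A" and c: "c\<in>Hor A"
    and bd: "hdom A a = vdom A u" "hcod A a = vdom A u'" "hdom A c = vcod A u" "hcod A c = vcod A u'"
    and b: "\<beta>\<in>Sq B" "sleft B \<beta> = FV F u" "sright B \<beta> = FV F u'" "stop B \<beta> = FH F a" "sbot B \<beta> = FH F c"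
  shows "\<exists>!\<alpha>. \<alpha> \<in> Sq A \<and> sleft A \<alpha> = u \<and> sright A \<alpha> = u' \<and> stop A \<alpha> = a \<and> sbot A \<alpha> = c \<and> FS F \<alpha> = \<beta>"
proof -
  note H3 = HV_parts(3)[OF H V] and V2 = HV_parts(5)[OF H V] and V3 = HV_parts(6)[OF H V]
  have ex: "\<exists>\<alpha>. \<alpha> \<in> Sq A \<and> sleft A \<alpha> = u \<and> sright A \<alpha> = u' \<and> stop A \<alpha> = a \<and> sbot A \<alpha> = c \<and> FS F \<alpha> = \<beta>"
  proof -
    obtain \<alpha>0 \<theta> where a0: "\<alpha>0 \<in> Sq A" "sleft A \<alpha>0 = u" "sright A \<alpha>0 = u'" "invertible2 (VV B) \<theta>"
      "src2 (VV B) \<theta> = \<beta>" "tgt2 (VV B) \<theta> = FS F \<alpha>0"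
      using V2[rule_format, OF u u' b(1)] b(2,3) by blast
    obtain p \<sigma>0 \<sigma>1 q where tq: "\<theta> = (p,\<sigma>0,\<sigma>1,q)" by (metis prod_cases4)
    have inv: "invertible2 (VV B) (\<beta>,\<sigma>0,\<sigma>1,FS F \<alpha>0)" using a0 tq by simp
    from inv obtain \<theta>' where th': "\<theta>' \<in> Cell (VV B)" "src2 (VV B) \<theta>' = FS F \<alpha>0" "tgt2 (VV B) \<theta>' = \<beta>"
      "vcomp2 (VV B) \<theta>' (\<beta>,\<sigma>0,\<sigma>1,FS F \<alpha>0) = id2 (VV B) \<beta>"
      unfolding invertible2_def VV_simps(7,8) by blast
    obtain p' \<rho>0 \<rho>1 q' where tq': "\<theta>' = (p',\<rho>0,\<rho>1,q')" by (metis prod_cases4)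
    have pq': "p' = FS F \<alpha>0" "q' = \<beta>" using th'(2,3) tq' by auto
    have r1: "\<rho>1 \<in> Cell (HH B)" "stop B \<rho>1 = sbot B (FS F \<alpha>0)" "sbot B \<rho>1 = sbot B \<beta>"
      using th'(1) unfolding tq' pq' VV_simps(11) by auto
    have r1': "svcmp B \<rho>1 \<sigma>1 = svid B (sbot B \<beta>)" using th'(4) unfolding tq' pq' VV_simps(9,10) by simp
    have sg: "\<sigma>0 \<in> Cell (HH B)" "stop B \<sigma>0 = stop B \<beta>" "sbot B \<sigma>0 = stop B (FS F \<alpha>0)"
      "\<sigma>1 \<in> Cell (HH B)" "stop B \<sigma>1 = sbot B \<beta>" "sbot B \<sigma>1 = sbot B (FS F \<alpha>0)"
      "svcmp B (FS F \<alpha>0) \<sigma>0 = svcmp B \<sigma>1 \<beta>"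
      using inv unfolding invertible2_def VV_simps(11) by auto
    note S0 = A.sq[OF a0(1)] and F0 = FS[OF a0(1)]
    have E0: "\<exists>!\<tau>. \<tau> \<in> Cell (HH A) \<and> stop A \<tau> = a \<and> sbot A \<tau> = stop A \<alpha>0 \<and> FS F \<tau> = \<sigma>0"
      apply (rule H3[rule_format, OF a _ _ sg(1)])
      using S0 a0 bd sg F0 b by auto
    have E1: "\<exists>!\<tau>. \<tau> \<in> Cell (HH A) \<and> stop A \<tau> = sbot A \<alpha>0 \<and> sbot A \<tau> = c \<and> FS F \<tau> = \<rho>1"
      apply (rule H3[rule_format, OF _ c _ r1(1)])
      using S0 a0 bd r1 F0 b by auto
    obtain \<tau>0 where t0: "\<tau>0 \<in> Cell (HH A)" "stop A \<tau>0 = a" "sbot A \<tau>0 = stop A \<alpha>0" "FS F \<tau>0 = \<sigma>0"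
      using ex1_implies_ex[OF E0] by blast
    obtain \<tau>1 where t1: "\<tau>1 \<in> Cell (HH A)" "stop A \<tau>1 = sbot A \<alpha>0" "sbot A \<tau>1 = c" "FS F \<tau>1 = \<rho>1"
      using ex1_implies_ex[OF E1] by blast
    have T0: "\<tau>0 \<in> Sq A" "sleft A \<tau>0 = vid A (vdom A u)" "sright A \<tau>0 = vid A (vdom A u')"
      using t0 bd by auto
    have T1: "\<tau>1 \<in> Sq A" "sleft A \<tau>1 = vid A (vcod A u)" "sright A \<tau>1 = vid A (vcod A u')"
      using t1 S0 a0 by auto
    define M where "M = svcmp A \<alpha>0 \<tau>0"
    have M: "M \<in> Sq A" "stop A M = a" "sbot A M = sbot A \<alpha>0" "sleft A M = u" "sright A M = u'"
      using A.svcmp[OF T0(1) a0(1)] t0 T0 a0 A.vunit[OF u] A.vunit[OF u'] unfolding M_def by auto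
    define \<alpha> where "\<alpha> = svcmp A \<tau>1 M"
    have al: "\<alpha> \<in> Sq A" "stop A \<alpha> = a" "sbot A \<alpha> = c" "sleft A \<alpha> = u" "sright A \<alpha> = u'"
      using A.svcmp[OF M(1) T1(1)] t1 T1 M A.vunit[OF u] A.vunit[OF u'] unfolding \<alpha>_def by auto
    have sq1: "\<sigma>1 \<in> Sq B" "\<rho>1 \<in> Sq B" using sg r1 by auto
    have "FS F \<alpha> = svcmp B \<rho>1 (svcmp B (FS F \<alpha>0) \<sigma>0)"
      unfolding \<alpha>_def M_def using Fsvcmp[OF T0(1) a0(1)] Fsvcmp[OF M(1) T1(1)] t0 t1 M
      unfolding M_def by simp
    also have "\<dots> = svcmp B \<rho>1 (svcmp B \<sigma>1 \<beta>)" using sg(7) by simp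
    also have "\<dots> = svcmp B (svcmp B \<rho>1 \<sigma>1) \<beta>" using B.sassoc[OF b(1) sq1(1) sq1(2)] sg r1 by simp
    also have "\<dots> = \<beta>" using r1' B.sunit[OF b(1)] by simp
    finally show ?thesis using al by blast
  qed
  have uq: "\<alpha>2 = \<alpha>1" if
    p1: "\<alpha>1 \<in> Sq A" "sleft A \<alpha>1 = u" "sright A \<alpha>1 = u'" "stop A \<alpha>1 = a" "sbot A \<alpha>1 = c" "FS F \<alpha>1 = \<beta>" and
    p2: "\<alpha>2 \<in> Sq A" "sleft A \<alpha>2 = u" "sright A \<alpha>2 = u'" "stop A \<alpha>2 = a" "sbot A \<alpha>2 = c" "FS F \<alpha>2 = \<beta>"
    for \<alpha>1 \<alpha>2
  proof -
    note Fa = FH[OF a] and Fc = FH[OF c]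
    have sa: "svid B (FH F a) \<in> Cell (HH B)" "stop B (svid B (FH F a)) = FH F a" "sbot B (svid B (FH F a)) = FH F a"
      using B.svid[OF Fa[THEN conjunct1]] by auto
    have sc: "svid B (FH F c) \<in> Cell (HH B)" "stop B (svid B (FH F c)) = FH F c" "sbot B (svid B (FH F c)) = FH F c"
      using B.svid[OF Fc[THEN conjunct1]] by auto
    have bc: "(FS F \<alpha>1, svid B (FH F a), svid B (FH F c), FS F \<alpha>2) \<in> Cell (VV B)"
      unfolding VV_simps(11) using sa sc p1(6) p2(6) b B.sunit[OF b(1)] by simp
    have "\<exists>!\<alpha>. \<alpha> \<in> Cell (VV A) \<and> src2 (VV A) \<alpha> = \<alpha>1 \<and> tgt2 (VV A) \<alpha> = \<alpha>2 \<and>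
        G2 (VF F) \<alpha> = (FS F \<alpha>1, svid B (FH F a), svid B (FH F c), FS F \<alpha>2)"
      by (rule V3[rule_format, OF p1(1) p2(1) _ bc]) (use p1 p2 in simp_all)
    from ex1_implies_ex[OF this] obtain \<alpha>' where al': "\<alpha>' \<in> Cell (VV A)" "src2 (VV A) \<alpha>' = \<alpha>1" "tgt2 (VV A) \<alpha>' = \<alpha>2"
        "G2 (VF F) \<alpha>' = (FS F \<alpha>1, svid B (FH F a), svid B (FH F c), FS F \<alpha>2)" by blast
    obtain x s0 s1 y where tq: "\<alpha>' = (x,s0,s1,y)" by (metis prod_cases4)
    have xy: "x = \<alpha>1" "y = \<alpha>2" "FS F s0 = svid B (FH F a)" "FS F s1 = svid B (FH F c)"
      using al'(2-4) unfolding tq VV_simps(7,8) F_simps(6) by auto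
    have cs: "s0 \<in> Cell (HH A)" "stop A s0 = a" "sbot A s0 = a" "s1 \<in> Cell (HH A)" "stop A s1 = c" "sbot A s1 = c"
      "svcmp A \<alpha>2 s0 = svcmp A s1 \<alpha>1"
      using al'(1) unfolding tq xy(1,2) VV_simps(11) using p1 p2 by auto
    have Ea: "\<exists>!t. t \<in> Cell (HH A) \<and> stop A t = a \<and> sbot A t = a \<and> FS F t = svid B (FH F a)"
      by (rule H3[rule_format, OF a a _ sa(1)]) (use sa in simp_all)
    have Ec: "\<exists>!t. t \<in> Cell (HH A) \<and> stop A t = c \<and> sbot A t = c \<and> FS F t = svid B (FH F c)"
      by (rule H3[rule_format, OF c c _ sc(1)]) (use sc in simp_all)
    have va: "svid A a \<in> Cell (HH A)" "stop A (svid A a) = a" "sbot A (svid A a) = a"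
      using A.svid[OF a] by auto
    have vc: "svid A c \<in> Cell (HH A)" "stop A (svid A c) = c" "sbot A (svid A c) = c"
      using A.svid[OF c] by auto
    have "s0 = svid A a" by (rule ex1_uniq[OF Ea]) (use cs xy va Fsvid[OF a] in simp_all)
    moreover have "s1 = svid A c" by (rule ex1_uniq[OF Ec]) (use cs xy vc Fsvid[OF c] in simp_all)
    ultimately have "svcmp A \<alpha>2 (svid A a) = svcmp A (svid A c) \<alpha>1" using cs(7) by simp
    then show ?thesis using A.sunit[OF p1(1)] A.sunit[OF p2(1)] p1 p2 by simp
  qed
  from ex obtain w where w: "w \<in> Sq A \<and> sleft A w = u \<and> sright A w = u' \<and> stop A w = a \<and> sbot A w = c \<and> FS F w = \<beta>"
    by blast
  show ?thesis
  proof (rule ex1I[of _ w])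
    show "w \<in> Sq A \<and> sleft A w = u \<and> sright A w = u' \<and> stop A w = a \<and> sbot A w = c \<and> FS F w = \<beta>" using w .
  next
    fix \<alpha> assume "\<alpha> \<in> Sq A \<and> sleft A \<alpha> = u \<and> sright A \<alpha> = u' \<and> stop A \<alpha> = a \<and> sbot A \<alpha> = c \<and> FS F \<alpha> = \<beta>"
    then show "\<alpha> = w" using w uq[of w \<alpha>] by blast
  qed
qed

lemma db_from_HV:
  assumes H: "biequivalence (HH A) (HH B) (HF F)" and V: "biequivalence (VV A) (VV B) (VF F)"
  shows "double_biequivalence A B F"
proof -
  note P = HV_parts[OF H V]
  have 1: "\<forall>Y\<in>Ob B. \<exists>X\<in>Ob A. \<exists>h. horizontal_equivalence B h \<and> hdom B h = Y \<and> hcod B h = FO F X"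
    using P(1) unfolding horizontal_equivalence_def .
  have 2: "\<forall>X\<in>Ob A. \<forall>Z\<in>Ob A. \<forall>b\<in>Hor B. hdom B b = FO F X \<and> hcod B b = FO F Z \<longrightarrow>
       (\<exists>a\<in>Hor A. hdom A a = X \<and> hcod A a = Z \<and>
          (\<exists>\<theta>. vertically_invertible B \<theta> \<and> sleft B \<theta> = vid B (FO F X) \<and> sright B \<theta> = vid B (FO F Z) \<and>
               stop B \<theta> = b \<and> sbot B \<theta> = FH F a))"
  proof (intro ballI impI)
    fix X Z b assume X: "X\<in>Ob A" "Z\<in>Ob A" "b\<in>Hor B" "hdom B b = FO F X \<and> hcod B b = FO F Z"
    obtain a \<theta> where a: "a\<in>Hor A" "hdom A a = X" "hcod A a = Z" "invertible2 (HH B) \<theta>" "stop B \<theta> = b"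
      "sbot B \<theta> = FH F a"
      using P(2)[rule_format, OF X(1) X(2) X(3) X(4)] by blast
    have "vertically_invertible B \<theta>" "sleft B \<theta> = vid B (FO F X)" "sright B \<theta> = vid B (FO F Z)"
      using B.HH_vinv[OF a(4)] a(5) X(4) by auto
    then show "\<exists>a\<in>Hor A. hdom A a = X \<and> hcod A a = Z \<and>
          (\<exists>\<theta>. vertically_invertible B \<theta> \<and> sleft B \<theta> = vid B (FO F X) \<and> sright B \<theta> = vid B (FO F Z) \<and>
               stop B \<theta> = b \<and> sbot B \<theta> = FH F a)" using a by blast
  qed
  have 3: "\<forall>v\<in>Ver B. \<exists>u\<in>Ver A. \<exists>\<alpha>. \<alpha> \<in> Sq B \<and> weakly_horizontally_invertible B \<alpha> \<and>
        sleft B \<alpha> = v \<and> sright B \<alpha> = FV F u \<and>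
        horizontal_equivalence B (stop B \<alpha>) \<and> horizontal_equivalence B (sbot B \<alpha>)"
  proof
    fix v assume v: "v \<in> Ver B"
    obtain X e where e: "X \<in> Ver A" "equivalence1 (VV B) e" "sleft B e = v" "sright B e = FV F X"
      using P(4) v by blast
    have "e \<in> Sq B" using e(2) unfolding equivalence1_def by simp
    then show "\<exists>u\<in>Ver A. \<exists>\<alpha>. \<alpha> \<in> Sq B \<and> weakly_horizontally_invertible B \<alpha> \<and>
        sleft B \<alpha> = v \<and> sright B \<alpha> = FV F u \<and>
        horizontal_equivalence B (stop B \<alpha>) \<and> horizontal_equivalence B (sbot B \<alpha>)"
      using e B.VV_equiv[OF e(2)] unfolding weakly_horizontally_invertible_def horizontal_equivalence_def by blast
  qed
  have 4: "\<forall>u\<in>Ver A. \<forall>u'\<in>Ver A. \<forall>a\<in>Hor A. \<forall>c\<in>Hor A.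
       hdom A a = vdom A u \<and> hcod A a = vdom A u' \<and> hdom A c = vcod A u \<and> hcod A c = vcod A u' \<longrightarrow>
       (\<forall>\<beta>\<in>Sq B. sleft B \<beta> = FV F u \<and> sright B \<beta> = FV F u' \<and> stop B \<beta> = FH F a \<and> sbot B \<beta> = FH F c \<longrightarrow>
          (\<exists>!\<alpha>. \<alpha> \<in> Sq A \<and> sleft A \<alpha> = u \<and> sright A \<alpha> = u' \<and> stop A \<alpha> = a \<and> sbot A \<alpha> = c \<and>
                 FS F \<alpha> = \<beta>))"
  proof (intro ballI impI)
    fix u u' a c \<beta> assume h: "u\<in>Ver A" "u'\<in>Ver A" "a\<in>Hor A" "c\<in>Hor A"
      "hdom A a = vdom A u \<and> hcod A a = vdom A u' \<and> hdom A c = vcod A u \<and> hcod A c = vcod A u'"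
      "\<beta>\<in>Sq B" "sleft B \<beta> = FV F u \<and> sright B \<beta> = FV F u' \<and> stop B \<beta> = FH F a \<and> sbot B \<beta> = FH F c"
    show "\<exists>!\<alpha>. \<alpha> \<in> Sq A \<and> sleft A \<alpha> = u \<and> sright A \<alpha> = u' \<and> stop A \<alpha> = a \<and> sbot A \<alpha> = c \<and> FS F \<alpha> = \<beta>"
      using h by (intro db4_from_HV[OF H V]) simp_all
  qed
  show ?thesis unfolding double_biequivalence_def using 1 2 3 4 by (intro conjI)
qed

end

theorem proposition3p12:
  fixes A :: "('o,'h,'v,'s) dbl" and B :: "('o2,'h2,'v2,'s2) dbl"
    and F :: "('o,'h,'v,'s,'o2,'h2,'v2,'s2) dfun"
  assumes "double_category A" and "double_category B" and "double_functor A B F"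
  shows "double_biequivalence A B F \<longleftrightarrow>
           biequivalence (HH A) (HH B) (HF F) \<and> biequivalence (VV A) (VV B) (VF F)"
proof -
  interpret dfc A B F using assms by (simp add: dfc_def dfc_axioms_def dc_def)
  show ?thesis using H_from_db V_from_db db_from_HV by blast
qed

end
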